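(* Let $G\in\mathfrak D_4$ and suppose $G$ contains nine distinct vertices $a_i,b_i,c_i$ ($i\in\mathbb Z/3\mathbb Z$) such that $a_ic_i,\ b_ic_i\in E(G)$ for all $i$ and $a_ib_j\in E(G)$ for all $i\ne j$ (i.e. a subgraph isomorphic to the graph $N$ with these edges). Then for every $i\in\mathbb Z/3\mathbb Z$, either $c_{i-1}c_{i+1}\in E(G)$, or there is a vertex of $G$ adjacent to all of $a_i,b_i,c_{i-1},c_{i+1}$.
   Context: $\mathfrak D_4$ is the class of (finite) maximal triangle-free graphs satisfying property $\mathscr{D}_4$. Maximal triangle-free: no triangle, and adding any new edge creates a triangle. Property $\mathscr{D}_k$: for every $m\in\{1,\dots,k\}$ and every sequence $x_1,\dots,x_{3m}$ of (not necessarily distinct) vertices there is a vertex $y$ with $|\{i\in[3m]: x_iy\in E(G)\}|\ge m+1$. *)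

theory Defs
  imports Main
begin

definition simple_graph :: "'a set \<Rightarrow> ('a \<Rightarrow> 'a \<Rightarrow> bool) \<Rightarrow> bool" where
  "simple_graph V E \<longleftrightarrow> finite V \<and> (\<forall>x y. E x y \<longrightarrow> x \<in> V \<and> y \<in> V)
     \<and> (\<forall>x y. E x y \<longrightarrow> E y x) \<and> (\<forall>x. \<not> E x x)"

definition triangle_free :: "'a set \<Rightarrow> ('a \<Rightarrow> 'a \<Rightarrow> bool) \<Rightarrow> bool" where
  "triangle_free V E \<longleftrightarrow> \<not> (\<exists>x\<in>V. \<exists>y\<in>V. \<exists>z\<in>V. E x y \<and> E y z \<and> E x z)"

text \<open>Maximal triangle-free: triangle-free, and adding any non-edge between two distinct
  vertices creates a triangle, i.e. the two vertices have a common neighbour.\<close>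
definition maximal_triangle_free :: "'a set \<Rightarrow> ('a \<Rightarrow> 'a \<Rightarrow> bool) \<Rightarrow> bool" where
  "maximal_triangle_free V E \<longleftrightarrow> simple_graph V E \<and> triangle_free V E \<and>
     (\<forall>x\<in>V. \<forall>y\<in>V. x \<noteq> y \<and> \<not> E x y \<longrightarrow> (\<exists>z\<in>V. E x z \<and> E z y))"

definition prop_D :: "nat \<Rightarrow> 'a set \<Rightarrow> ('a \<Rightarrow> 'a \<Rightarrow> bool) \<Rightarrow> bool" where
  "prop_D k V E \<longleftrightarrow> (\<forall>m\<in>{1..k}. \<forall>x::nat \<Rightarrow> 'a. (\<forall>i<3*m. x i \<in> V) \<longrightarrow>
     (\<exists>y\<in>V. card {i. i < 3*m \<and> E (x i) y} \<ge> m + 1))"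

definition in_D4 :: "'a set \<Rightarrow> ('a \<Rightarrow> 'a \<Rightarrow> bool) \<Rightarrow> bool" where
  "in_D4 V E \<longleftrightarrow> maximal_triangle_free V E \<and> prop_D 4 V E"

end

theory Submission imports Defs begin

lemma g_sym: "in_D4 V E \<Longrightarrow> E x y \<Longrightarrow> E y x"
  unfolding in_D4_def maximal_triangle_free_def simple_graph_def by blast

lemma g_tri: "in_D4 V E \<Longrightarrow> E u v \<Longrightarrow> E u w \<Longrightarrow> E v w \<Longrightarrow> False"
  unfolding in_D4_def maximal_triangle_free_def simple_graph_def triangle_free_def by blast

lemma g_max: "in_D4 V E \<Longrightarrow> x \<in> V \<Longrightarrow> y \<in> V \<Longrightarrow> x \<noteq> y \<Longrightarrow> \<not> E x y \<Longrightarrow> \<exists>z\<in>V. E x z \<and> E z y"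
  unfolding in_D4_def maximal_triangle_free_def by blast

lemma len_filter_sum: "int (length (filter P xs)) = sum_list (map (\<lambda>x. if P x then 1::int else 0) xs)"
  by (induction xs) auto

lemma g_D: assumes "in_D4 V E" "set xs \<subseteq> V" "length xs = 3*m" "1 \<le> m" "m \<le> 4"
  shows "\<exists>y\<in>V. int m + 1 \<le> sum_list (map (\<lambda>x. if E x y then 1::int else 0) xs)"
proof -
  have "prop_D 4 V E" using assms(1) unfolding in_D4_def by blast
  then have "\<forall>x::nat \<Rightarrow> _. (\<forall>i<3*m. x i \<in> V) \<longrightarrow> (\<exists>y\<in>V. card {i. i < 3*m \<and> E (x i) y} \<ge> m + 1)"
    using assms(4,5) unfolding prop_D_def by auto
  moreover have "\<forall>i<3*m. xs ! i \<in> V" using assms(2,3) by (metis nth_mem subsetD)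
  ultimately obtain y where "y \<in> V" "card {i. i < 3*m \<and> E (xs ! i) y} \<ge> m + 1" by blast
  moreover have "card {i. i < 3*m \<and> E (xs ! i) y} = length (filter (\<lambda>u. E u y) xs)"
    using assms(3) length_filter_conv_card[of "\<lambda>u. E u y" xs] by simp
  ultimately show ?thesis using len_filter_sum[of "\<lambda>u. E u y" xs] by force
qed

lemma caseB:
  assumes G: "in_D4 V E"
  and V: "a0 \<in> V" "a1 \<in> V" "a2 \<in> V" "b0 \<in> V" "b1 \<in> V" "b2 \<in> V" "c0 \<in> V" "c1 \<in> V" "c2 \<in> V"
  and N: "E a0 c0" "E b0 c0" "E a0 b1" "E a0 b2" "E a1 c1" "E b1 c1" "E a1 b0" "E a1 b2" "E a2 c2" "E b2 c2" "E a2 b0" "E a2 b1"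
  and nw: "\<not> (\<exists>w\<in>V. E w a0 \<and> E w b0 \<and> E w c2 \<and> E w c1)"
  and e01: "E c0 c1"
  and e02: "\<not> E c0 c2"
  and e12: "\<not> E c1 c2"
  and n02: "c0 \<noteq> c2"
  and n12: "c1 \<noteq> c2"
  shows False
proof -
  obtain d where dV: "d \<in> V" and ez1: "E c1 d" and ez2: "E d c2" using g_max[OF G V(8) V(9) n12 e12] by blast
  obtain e where eV: "e \<in> V" and ez3: "E c0 e" and ez4: "E e c2" using g_max[OF G V(7) V(9) n02 e02] by blast
  obtain y11 where y11V: "y11 \<in> V" and cnt5: "4 \<le> sum_list (map (\<lambda>x. if E x y11 then 1::int else 0) [a0, a1, a2, b0, b1, b2, c0, c1, c2])"
    using g_D[OF G, of "[a0, a1, a2, b0, b1, b2, c0, c1, c2]" 3] V(1) V(2) V(3) V(4) V(5) V(6) V(7) V(8) V(9) by auto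
  have cs6: "4 \<le> (if E a0 y11 then 1::int else 0) + ((if E a1 y11 then 1::int else 0) + ((if E a2 y11 then 1::int else 0) + ((if E b0 y11 then 1::int else 0) + ((if E b1 y11 then 1::int else 0) + ((if E b2 y11 then 1::int else 0) + ((if E c0 y11 then 1::int else 0) + ((if E c1 y11 then 1::int else 0) + ((if E c2 y11 then 1::int else 0)))))))))" using cnt5 by simp
  have tr7: "\<not> (E a0 y11 \<and> E b1 y11)" using g_tri[OF G N(3)] by blast
  have tr8: "\<not> (E a0 y11 \<and> E b2 y11)" using g_tri[OF G N(4)] by blast
  have tr9: "\<not> (E a0 y11 \<and> E c0 y11)" using g_tri[OF G N(1)] by blast
  have tr10: "\<not> (E a1 y11 \<and> E b0 y11)" using g_tri[OF G N(7)] by blast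
  have tr11: "\<not> (E a1 y11 \<and> E b2 y11)" using g_tri[OF G N(8)] by blast
  have tr12: "\<not> (E a1 y11 \<and> E c1 y11)" using g_tri[OF G N(5)] by blast
  have tr13: "\<not> (E a2 y11 \<and> E b0 y11)" using g_tri[OF G N(11)] by blast
  have tr14: "\<not> (E a2 y11 \<and> E b1 y11)" using g_tri[OF G N(12)] by blast
  have tr15: "\<not> (E a2 y11 \<and> E c2 y11)" using g_tri[OF G N(9)] by blast
  have tr16: "\<not> (E b0 y11 \<and> E c0 y11)" using g_tri[OF G N(2)] by blast
  have tr17: "\<not> (E b1 y11 \<and> E c1 y11)" using g_tri[OF G N(6)] by blast
  have tr18: "\<not> (E b2 y11 \<and> E c2 y11)" using g_tri[OF G N(10)] by blast
  have tr19: "\<not> (E c0 y11 \<and> E c1 y11)" using g_tri[OF G e01] by blast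
  have nw20: "\<not> (E a0 y11 \<and> E b0 y11 \<and> E c2 y11 \<and> E c1 y11)" using nw y11V g_sym[OF G] by blast
  have br21: "(E a1 y11 \<and> E b1 y11 \<and> E c0 y11 \<and> E c2 y11)" using cs6 tr7 tr8 tr9 tr10 tr11 tr12 tr13 tr14 tr15 tr16 tr17 tr18 tr19 nw20 by (smt (verit))
  have cs22: False if "E a1 y11 \<and> E b1 y11 \<and> E c0 y11 \<and> E c2 y11" proof -
    from that have e23: "E a1 y11" and e24: "E b1 y11" and e25: "E c0 y11" and e26: "E c2 y11" by blast+
    obtain y12 where y12V: "y12 \<in> V" and cnt27: "4 \<le> sum_list (map (\<lambda>x. if E x y12 then 1::int else 0) [a0, a1, a2, b0, b1, b2, c1, c2, d])"
      using g_D[OF G, of "[a0, a1, a2, b0, b1, b2, c1, c2, d]" 3] V(1) V(2) V(3) V(4) V(5) V(6) V(8) V(9) dV by auto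
    have cs28: "4 \<le> (if E a0 y12 then 1::int else 0) + ((if E a1 y12 then 1::int else 0) + ((if E a2 y12 then 1::int else 0) + ((if E b0 y12 then 1::int else 0) + ((if E b1 y12 then 1::int else 0) + ((if E b2 y12 then 1::int else 0) + ((if E c1 y12 then 1::int else 0) + ((if E c2 y12 then 1::int else 0) + ((if E d y12 then 1::int else 0)))))))))" using cnt27 by simp
    have tr29: "\<not> (E a0 y12 \<and> E b1 y12)" using g_tri[OF G N(3)] by blast
    have tr30: "\<not> (E a0 y12 \<and> E b2 y12)" using g_tri[OF G N(4)] by blast
    have tr31: "\<not> (E a1 y12 \<and> E b0 y12)" using g_tri[OF G N(7)] by blast
    have tr32: "\<not> (E a1 y12 \<and> E b2 y12)" using g_tri[OF G N(8)] by blast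
    have tr33: "\<not> (E a1 y12 \<and> E c1 y12)" using g_tri[OF G N(5)] by blast
    have tr34: "\<not> (E a2 y12 \<and> E b0 y12)" using g_tri[OF G N(11)] by blast
    have tr35: "\<not> (E a2 y12 \<and> E b1 y12)" using g_tri[OF G N(12)] by blast
    have tr36: "\<not> (E a2 y12 \<and> E c2 y12)" using g_tri[OF G N(9)] by blast
    have tr37: "\<not> (E b1 y12 \<and> E c1 y12)" using g_tri[OF G N(6)] by blast
    have tr38: "\<not> (E b2 y12 \<and> E c2 y12)" using g_tri[OF G N(10)] by blast
    have tr39: "\<not> (E c1 y12 \<and> E d y12)" using g_tri[OF G ez1] by blast
    have tr40: "\<not> (E c2 y12 \<and> E d y12)" using g_tri[OF G ez2] by blast
    have nw41: "\<not> (E a0 y12 \<and> E b0 y12 \<and> E c2 y12 \<and> E c1 y12)" using nw y12V g_sym[OF G] by blast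
    have br42: "(E a0 y12 \<and> E a1 y12 \<and> E a2 y12 \<and> E d y12) \<or> (E b0 y12 \<and> E b1 y12 \<and> E b2 y12 \<and> E d y12)" using cs28 tr29 tr30 tr31 tr32 tr33 tr34 tr35 tr36 tr37 tr38 tr39 tr40 nw41 by (smt (verit))
    have cs43: False if "E a0 y12 \<and> E a1 y12 \<and> E a2 y12 \<and> E d y12" proof -
      from that have e44: "E a0 y12" and e45: "E a1 y12" and e46: "E a2 y12" and e47: "E d y12" by blast+
      obtain y13 where y13V: "y13 \<in> V" and cnt48: "4 \<le> sum_list (map (\<lambda>x. if E x y13 then 1::int else 0) [a0, a2, b0, b1, b2, c0, c1, c2, d])"
        using g_D[OF G, of "[a0, a2, b0, b1, b2, c0, c1, c2, d]" 3] V(1) V(3) V(4) V(5) V(6) V(7) V(8) V(9) dV by auto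
      have cs49: "4 \<le> (if E a0 y13 then 1::int else 0) + ((if E a2 y13 then 1::int else 0) + ((if E b0 y13 then 1::int else 0) + ((if E b1 y13 then 1::int else 0) + ((if E b2 y13 then 1::int else 0) + ((if E c0 y13 then 1::int else 0) + ((if E c1 y13 then 1::int else 0) + ((if E c2 y13 then 1::int else 0) + ((if E d y13 then 1::int else 0)))))))))" using cnt48 by simp
      have tr50: "\<not> (E a0 y13 \<and> E b1 y13)" using g_tri[OF G N(3)] by blast
      have tr51: "\<not> (E a0 y13 \<and> E b2 y13)" using g_tri[OF G N(4)] by blast
      have tr52: "\<not> (E a0 y13 \<and> E c0 y13)" using g_tri[OF G N(1)] by blast
      have tr53: "\<not> (E a2 y13 \<and> E b0 y13)" using g_tri[OF G N(11)] by blast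
      have tr54: "\<not> (E a2 y13 \<and> E b1 y13)" using g_tri[OF G N(12)] by blast
      have tr55: "\<not> (E a2 y13 \<and> E c2 y13)" using g_tri[OF G N(9)] by blast
      have tr56: "\<not> (E b0 y13 \<and> E c0 y13)" using g_tri[OF G N(2)] by blast
      have tr57: "\<not> (E b1 y13 \<and> E c1 y13)" using g_tri[OF G N(6)] by blast
      have tr58: "\<not> (E b2 y13 \<and> E c2 y13)" using g_tri[OF G N(10)] by blast
      have tr59: "\<not> (E c0 y13 \<and> E c1 y13)" using g_tri[OF G e01] by blast
      have tr60: "\<not> (E c1 y13 \<and> E d y13)" using g_tri[OF G ez1] by blast
      have tr61: "\<not> (E c2 y13 \<and> E d y13)" using g_tri[OF G ez2] by blast
      have nw62: "\<not> (E a0 y13 \<and> E b0 y13 \<and> E c2 y13 \<and> E c1 y13)" using nw y13V g_sym[OF G] by blast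
      have br63: "(E a2 y13 \<and> E b2 y13 \<and> E c0 y13 \<and> E d y13) \<or> (E b0 y13 \<and> E b1 y13 \<and> E b2 y13 \<and> E d y13) \<or> (E b1 y13 \<and> E b2 y13 \<and> E c0 y13 \<and> E d y13)" using cs49 tr50 tr51 tr52 tr53 tr54 tr55 tr56 tr57 tr58 tr59 tr60 tr61 nw62 by (smt (verit))
      have cs64: False if "E a2 y13 \<and> E b2 y13 \<and> E c0 y13 \<and> E d y13" proof -
        from that have e65: "E a2 y13" and e66: "E b2 y13" and e67: "E c0 y13" and e68: "E d y13" by blast+
        obtain w69 where w69V: "w69 \<in> V" and cnt70: "5 \<le> sum_list (map (\<lambda>x. if E x w69 then 1::int else 0) [a0, a1, a2, b1, b2, c0, c1, c2, d, y11, y12, y13])"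
          using g_D[OF G, of "[a0, a1, a2, b1, b2, c0, c1, c2, d, y11, y12, y13]" 4] V(1) V(2) V(3) V(5) V(6) V(7) V(8) V(9) dV y11V y12V y13V by auto
        have cs71: "5 \<le> (if E a0 w69 then 1::int else 0) + ((if E a1 w69 then 1::int else 0) + ((if E a2 w69 then 1::int else 0) + ((if E b1 w69 then 1::int else 0) + ((if E b2 w69 then 1::int else 0) + ((if E c0 w69 then 1::int else 0) + ((if E c1 w69 then 1::int else 0) + ((if E c2 w69 then 1::int else 0) + ((if E d w69 then 1::int else 0) + ((if E y11 w69 then 1::int else 0) + ((if E y12 w69 then 1::int else 0) + ((if E y13 w69 then 1::int else 0))))))))))))" using cnt70 by simp
        have tr72: "\<not> (E a0 w69 \<and> E b1 w69)" using g_tri[OF G N(3)] by blast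
        have tr73: "\<not> (E a0 w69 \<and> E b2 w69)" using g_tri[OF G N(4)] by blast
        have tr74: "\<not> (E a0 w69 \<and> E c0 w69)" using g_tri[OF G N(1)] by blast
        have tr75: "\<not> (E a0 w69 \<and> E y12 w69)" using g_tri[OF G e44] by blast
        have tr76: "\<not> (E a1 w69 \<and> E b2 w69)" using g_tri[OF G N(8)] by blast
        have tr77: "\<not> (E a1 w69 \<and> E c1 w69)" using g_tri[OF G N(5)] by blast
        have tr78: "\<not> (E a1 w69 \<and> E y11 w69)" using g_tri[OF G e23] by blast
        have tr79: "\<not> (E a1 w69 \<and> E y12 w69)" using g_tri[OF G e45] by blast
        have tr80: "\<not> (E a2 w69 \<and> E b1 w69)" using g_tri[OF G N(12)] by blast
        have tr81: "\<not> (E a2 w69 \<and> E c2 w69)" using g_tri[OF G N(9)] by blast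
        have tr82: "\<not> (E a2 w69 \<and> E y12 w69)" using g_tri[OF G e46] by blast
        have tr83: "\<not> (E a2 w69 \<and> E y13 w69)" using g_tri[OF G e65] by blast
        have tr84: "\<not> (E b1 w69 \<and> E c1 w69)" using g_tri[OF G N(6)] by blast
        have tr85: "\<not> (E b1 w69 \<and> E y11 w69)" using g_tri[OF G e24] by blast
        have tr86: "\<not> (E b2 w69 \<and> E c2 w69)" using g_tri[OF G N(10)] by blast
        have tr87: "\<not> (E b2 w69 \<and> E y13 w69)" using g_tri[OF G e66] by blast
        have tr88: "\<not> (E c0 w69 \<and> E c1 w69)" using g_tri[OF G e01] by blast
        have tr89: "\<not> (E c0 w69 \<and> E y11 w69)" using g_tri[OF G e25] by blast
        have tr90: "\<not> (E c0 w69 \<and> E y13 w69)" using g_tri[OF G e67] by blast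
        have tr91: "\<not> (E c1 w69 \<and> E d w69)" using g_tri[OF G ez1] by blast
        have tr92: "\<not> (E c2 w69 \<and> E d w69)" using g_tri[OF G ez2] by blast
        have tr93: "\<not> (E c2 w69 \<and> E y11 w69)" using g_tri[OF G e26] by blast
        have tr94: "\<not> (E d w69 \<and> E y12 w69)" using g_tri[OF G e47] by blast
        have tr95: "\<not> (E d w69 \<and> E y13 w69)" using g_tri[OF G e68] by blast
        show False using cs71 tr72 tr73 tr74 tr75 tr76 tr77 tr78 tr79 tr80 tr81 tr82 tr83 tr84 tr85 tr86 tr87 tr88 tr89 tr90 tr91 tr92 tr93 tr94 tr95 by (smt (verit))
      qed
      have cs96: False if "E b0 y13 \<and> E b1 y13 \<and> E b2 y13 \<and> E d y13" proof -
        from that have e97: "E b0 y13" and e98: "E b1 y13" and e99: "E b2 y13" and e100: "E d y13" by blast+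
        obtain w101 where w101V: "w101 \<in> V" and cnt102: "5 \<le> sum_list (map (\<lambda>x. if E x w101 then 1::int else 0) [a0, a1, a2, b0, b1, b2, c0, c1, c2, d, y12, y13])"
          using g_D[OF G, of "[a0, a1, a2, b0, b1, b2, c0, c1, c2, d, y12, y13]" 4] V(1) V(2) V(3) V(4) V(5) V(6) V(7) V(8) V(9) dV y12V y13V by auto
        have cs103: "5 \<le> (if E a0 w101 then 1::int else 0) + ((if E a1 w101 then 1::int else 0) + ((if E a2 w101 then 1::int else 0) + ((if E b0 w101 then 1::int else 0) + ((if E b1 w101 then 1::int else 0) + ((if E b2 w101 then 1::int else 0) + ((if E c0 w101 then 1::int else 0) + ((if E c1 w101 then 1::int else 0) + ((if E c2 w101 then 1::int else 0) + ((if E d w101 then 1::int else 0) + ((if E y12 w101 then 1::int else 0) + ((if E y13 w101 then 1::int else 0))))))))))))" using cnt102 by simp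
        have tr104: "\<not> (E a0 w101 \<and> E b1 w101)" using g_tri[OF G N(3)] by blast
        have tr105: "\<not> (E a0 w101 \<and> E b2 w101)" using g_tri[OF G N(4)] by blast
        have tr106: "\<not> (E a0 w101 \<and> E c0 w101)" using g_tri[OF G N(1)] by blast
        have tr107: "\<not> (E a0 w101 \<and> E y12 w101)" using g_tri[OF G e44] by blast
        have tr108: "\<not> (E a1 w101 \<and> E b0 w101)" using g_tri[OF G N(7)] by blast
        have tr109: "\<not> (E a1 w101 \<and> E b2 w101)" using g_tri[OF G N(8)] by blast
        have tr110: "\<not> (E a1 w101 \<and> E c1 w101)" using g_tri[OF G N(5)] by blast
        have tr111: "\<not> (E a1 w101 \<and> E y12 w101)" using g_tri[OF G e45] by blast
        have tr112: "\<not> (E a2 w101 \<and> E b0 w101)" using g_tri[OF G N(11)] by blast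
        have tr113: "\<not> (E a2 w101 \<and> E b1 w101)" using g_tri[OF G N(12)] by blast
        have tr114: "\<not> (E a2 w101 \<and> E c2 w101)" using g_tri[OF G N(9)] by blast
        have tr115: "\<not> (E a2 w101 \<and> E y12 w101)" using g_tri[OF G e46] by blast
        have tr116: "\<not> (E b0 w101 \<and> E c0 w101)" using g_tri[OF G N(2)] by blast
        have tr117: "\<not> (E b0 w101 \<and> E y13 w101)" using g_tri[OF G e97] by blast
        have tr118: "\<not> (E b1 w101 \<and> E c1 w101)" using g_tri[OF G N(6)] by blast
        have tr119: "\<not> (E b1 w101 \<and> E y13 w101)" using g_tri[OF G e98] by blast
        have tr120: "\<not> (E b2 w101 \<and> E c2 w101)" using g_tri[OF G N(10)] by blast
        have tr121: "\<not> (E b2 w101 \<and> E y13 w101)" using g_tri[OF G e99] by blast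
        have tr122: "\<not> (E c0 w101 \<and> E c1 w101)" using g_tri[OF G e01] by blast
        have tr123: "\<not> (E c1 w101 \<and> E d w101)" using g_tri[OF G ez1] by blast
        have tr124: "\<not> (E c2 w101 \<and> E d w101)" using g_tri[OF G ez2] by blast
        have tr125: "\<not> (E d w101 \<and> E y12 w101)" using g_tri[OF G e47] by blast
        have tr126: "\<not> (E d w101 \<and> E y13 w101)" using g_tri[OF G e100] by blast
        have nw127: "\<not> (E a0 w101 \<and> E b0 w101 \<and> E c2 w101 \<and> E c1 w101)" using nw w101V g_sym[OF G] by blast
        show False using cs103 tr104 tr105 tr106 tr107 tr108 tr109 tr110 tr111 tr112 tr113 tr114 tr115 tr116 tr117 tr118 tr119 tr120 tr121 tr122 tr123 tr124 tr125 tr126 nw127 by (smt (verit))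
      qed
      have cs128: False if "E b1 y13 \<and> E b2 y13 \<and> E c0 y13 \<and> E d y13" proof -
        from that have e129: "E b1 y13" and e130: "E b2 y13" and e131: "E c0 y13" and e132: "E d y13" by blast+
        obtain w133 where w133V: "w133 \<in> V" and cnt134: "5 \<le> sum_list (map (\<lambda>x. if E x w133 then 1::int else 0) [a0, a1, a2, b0, b1, b2, c0, c2, d, y11, y12, y13])"
          using g_D[OF G, of "[a0, a1, a2, b0, b1, b2, c0, c2, d, y11, y12, y13]" 4] V(1) V(2) V(3) V(4) V(5) V(6) V(7) V(9) dV y11V y12V y13V by auto
        have cs135: "5 \<le> (if E a0 w133 then 1::int else 0) + ((if E a1 w133 then 1::int else 0) + ((if E a2 w133 then 1::int else 0) + ((if E b0 w133 then 1::int else 0) + ((if E b1 w133 then 1::int else 0) + ((if E b2 w133 then 1::int else 0) + ((if E c0 w133 then 1::int else 0) + ((if E c2 w133 then 1::int else 0) + ((if E d w133 then 1::int else 0) + ((if E y11 w133 then 1::int else 0) + ((if E y12 w133 then 1::int else 0) + ((if E y13 w133 then 1::int else 0))))))))))))" using cnt134 by simp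
        have tr136: "\<not> (E a0 w133 \<and> E b1 w133)" using g_tri[OF G N(3)] by blast
        have tr137: "\<not> (E a0 w133 \<and> E b2 w133)" using g_tri[OF G N(4)] by blast
        have tr138: "\<not> (E a0 w133 \<and> E c0 w133)" using g_tri[OF G N(1)] by blast
        have tr139: "\<not> (E a0 w133 \<and> E y12 w133)" using g_tri[OF G e44] by blast
        have tr140: "\<not> (E a1 w133 \<and> E b0 w133)" using g_tri[OF G N(7)] by blast
        have tr141: "\<not> (E a1 w133 \<and> E b2 w133)" using g_tri[OF G N(8)] by blast
        have tr142: "\<not> (E a1 w133 \<and> E y11 w133)" using g_tri[OF G e23] by blast
        have tr143: "\<not> (E a1 w133 \<and> E y12 w133)" using g_tri[OF G e45] by blast
        have tr144: "\<not> (E a2 w133 \<and> E b0 w133)" using g_tri[OF G N(11)] by blast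
        have tr145: "\<not> (E a2 w133 \<and> E b1 w133)" using g_tri[OF G N(12)] by blast
        have tr146: "\<not> (E a2 w133 \<and> E c2 w133)" using g_tri[OF G N(9)] by blast
        have tr147: "\<not> (E a2 w133 \<and> E y12 w133)" using g_tri[OF G e46] by blast
        have tr148: "\<not> (E b0 w133 \<and> E c0 w133)" using g_tri[OF G N(2)] by blast
        have tr149: "\<not> (E b1 w133 \<and> E y11 w133)" using g_tri[OF G e24] by blast
        have tr150: "\<not> (E b1 w133 \<and> E y13 w133)" using g_tri[OF G e129] by blast
        have tr151: "\<not> (E b2 w133 \<and> E c2 w133)" using g_tri[OF G N(10)] by blast
        have tr152: "\<not> (E b2 w133 \<and> E y13 w133)" using g_tri[OF G e130] by blast
        have tr153: "\<not> (E c0 w133 \<and> E y11 w133)" using g_tri[OF G e25] by blast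
        have tr154: "\<not> (E c0 w133 \<and> E y13 w133)" using g_tri[OF G e131] by blast
        have tr155: "\<not> (E c2 w133 \<and> E d w133)" using g_tri[OF G ez2] by blast
        have tr156: "\<not> (E c2 w133 \<and> E y11 w133)" using g_tri[OF G e26] by blast
        have tr157: "\<not> (E d w133 \<and> E y12 w133)" using g_tri[OF G e47] by blast
        have tr158: "\<not> (E d w133 \<and> E y13 w133)" using g_tri[OF G e132] by blast
        show False using cs135 tr136 tr137 tr138 tr139 tr140 tr141 tr142 tr143 tr144 tr145 tr146 tr147 tr148 tr149 tr150 tr151 tr152 tr153 tr154 tr155 tr156 tr157 tr158 by (smt (verit))
      qed
      show False using br63 cs64 cs96 cs128 by blast
    qed
    have cs159: False if "E b0 y12 \<and> E b1 y12 \<and> E b2 y12 \<and> E d y12" proof -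
      from that have e160: "E b0 y12" and e161: "E b1 y12" and e162: "E b2 y12" and e163: "E d y12" by blast+
      obtain y13 where y13V: "y13 \<in> V" and cnt164: "4 \<le> sum_list (map (\<lambda>x. if E x y13 then 1::int else 0) [a0, a1, a2, b0, b2, c0, c1, c2, d])"
        using g_D[OF G, of "[a0, a1, a2, b0, b2, c0, c1, c2, d]" 3] V(1) V(2) V(3) V(4) V(6) V(7) V(8) V(9) dV by auto
      have cs165: "4 \<le> (if E a0 y13 then 1::int else 0) + ((if E a1 y13 then 1::int else 0) + ((if E a2 y13 then 1::int else 0) + ((if E b0 y13 then 1::int else 0) + ((if E b2 y13 then 1::int else 0) + ((if E c0 y13 then 1::int else 0) + ((if E c1 y13 then 1::int else 0) + ((if E c2 y13 then 1::int else 0) + ((if E d y13 then 1::int else 0)))))))))" using cnt164 by simp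
      have tr166: "\<not> (E a0 y13 \<and> E b2 y13)" using g_tri[OF G N(4)] by blast
      have tr167: "\<not> (E a0 y13 \<and> E c0 y13)" using g_tri[OF G N(1)] by blast
      have tr168: "\<not> (E a1 y13 \<and> E b0 y13)" using g_tri[OF G N(7)] by blast
      have tr169: "\<not> (E a1 y13 \<and> E b2 y13)" using g_tri[OF G N(8)] by blast
      have tr170: "\<not> (E a1 y13 \<and> E c1 y13)" using g_tri[OF G N(5)] by blast
      have tr171: "\<not> (E a2 y13 \<and> E b0 y13)" using g_tri[OF G N(11)] by blast
      have tr172: "\<not> (E a2 y13 \<and> E c2 y13)" using g_tri[OF G N(9)] by blast
      have tr173: "\<not> (E b0 y13 \<and> E c0 y13)" using g_tri[OF G N(2)] by blast
      have tr174: "\<not> (E b2 y13 \<and> E c2 y13)" using g_tri[OF G N(10)] by blast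
      have tr175: "\<not> (E c0 y13 \<and> E c1 y13)" using g_tri[OF G e01] by blast
      have tr176: "\<not> (E c1 y13 \<and> E d y13)" using g_tri[OF G ez1] by blast
      have tr177: "\<not> (E c2 y13 \<and> E d y13)" using g_tri[OF G ez2] by blast
      have nw178: "\<not> (E a0 y13 \<and> E b0 y13 \<and> E c2 y13 \<and> E c1 y13)" using nw y13V g_sym[OF G] by blast
      have br179: "(E a0 y13 \<and> E a1 y13 \<and> E a2 y13 \<and> E d y13) \<or> (E a1 y13 \<and> E a2 y13 \<and> E c0 y13 \<and> E d y13) \<or> (E a2 y13 \<and> E b2 y13 \<and> E c0 y13 \<and> E d y13)" using cs165 tr166 tr167 tr168 tr169 tr170 tr171 tr172 tr173 tr174 tr175 tr176 tr177 nw178 by (smt (verit))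
      have cs180: False if "E a0 y13 \<and> E a1 y13 \<and> E a2 y13 \<and> E d y13" proof -
        from that have e181: "E a0 y13" and e182: "E a1 y13" and e183: "E a2 y13" and e184: "E d y13" by blast+
        obtain w185 where w185V: "w185 \<in> V" and cnt186: "5 \<le> sum_list (map (\<lambda>x. if E x w185 then 1::int else 0) [a0, a1, a2, b0, b1, b2, c0, c1, c2, d, y12, y13])"
          using g_D[OF G, of "[a0, a1, a2, b0, b1, b2, c0, c1, c2, d, y12, y13]" 4] V(1) V(2) V(3) V(4) V(5) V(6) V(7) V(8) V(9) dV y12V y13V by auto
        have cs187: "5 \<le> (if E a0 w185 then 1::int else 0) + ((if E a1 w185 then 1::int else 0) + ((if E a2 w185 then 1::int else 0) + ((if E b0 w185 then 1::int else 0) + ((if E b1 w185 then 1::int else 0) + ((if E b2 w185 then 1::int else 0) + ((if E c0 w185 then 1::int else 0) + ((if E c1 w185 then 1::int else 0) + ((if E c2 w185 then 1::int else 0) + ((if E d w185 then 1::int else 0) + ((if E y12 w185 then 1::int else 0) + ((if E y13 w185 then 1::int else 0))))))))))))" using cnt186 by simp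
        have tr188: "\<not> (E a0 w185 \<and> E b1 w185)" using g_tri[OF G N(3)] by blast
        have tr189: "\<not> (E a0 w185 \<and> E b2 w185)" using g_tri[OF G N(4)] by blast
        have tr190: "\<not> (E a0 w185 \<and> E c0 w185)" using g_tri[OF G N(1)] by blast
        have tr191: "\<not> (E a0 w185 \<and> E y13 w185)" using g_tri[OF G e181] by blast
        have tr192: "\<not> (E a1 w185 \<and> E b0 w185)" using g_tri[OF G N(7)] by blast
        have tr193: "\<not> (E a1 w185 \<and> E b2 w185)" using g_tri[OF G N(8)] by blast
        have tr194: "\<not> (E a1 w185 \<and> E c1 w185)" using g_tri[OF G N(5)] by blast
        have tr195: "\<not> (E a1 w185 \<and> E y13 w185)" using g_tri[OF G e182] by blast
        have tr196: "\<not> (E a2 w185 \<and> E b0 w185)" using g_tri[OF G N(11)] by blast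
        have tr197: "\<not> (E a2 w185 \<and> E b1 w185)" using g_tri[OF G N(12)] by blast
        have tr198: "\<not> (E a2 w185 \<and> E c2 w185)" using g_tri[OF G N(9)] by blast
        have tr199: "\<not> (E a2 w185 \<and> E y13 w185)" using g_tri[OF G e183] by blast
        have tr200: "\<not> (E b0 w185 \<and> E c0 w185)" using g_tri[OF G N(2)] by blast
        have tr201: "\<not> (E b0 w185 \<and> E y12 w185)" using g_tri[OF G e160] by blast
        have tr202: "\<not> (E b1 w185 \<and> E c1 w185)" using g_tri[OF G N(6)] by blast
        have tr203: "\<not> (E b1 w185 \<and> E y12 w185)" using g_tri[OF G e161] by blast
        have tr204: "\<not> (E b2 w185 \<and> E c2 w185)" using g_tri[OF G N(10)] by blast
        have tr205: "\<not> (E b2 w185 \<and> E y12 w185)" using g_tri[OF G e162] by blast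
        have tr206: "\<not> (E c0 w185 \<and> E c1 w185)" using g_tri[OF G e01] by blast
        have tr207: "\<not> (E c1 w185 \<and> E d w185)" using g_tri[OF G ez1] by blast
        have tr208: "\<not> (E c2 w185 \<and> E d w185)" using g_tri[OF G ez2] by blast
        have tr209: "\<not> (E d w185 \<and> E y12 w185)" using g_tri[OF G e163] by blast
        have tr210: "\<not> (E d w185 \<and> E y13 w185)" using g_tri[OF G e184] by blast
        have nw211: "\<not> (E a0 w185 \<and> E b0 w185 \<and> E c2 w185 \<and> E c1 w185)" using nw w185V g_sym[OF G] by blast
        show False using cs187 tr188 tr189 tr190 tr191 tr192 tr193 tr194 tr195 tr196 tr197 tr198 tr199 tr200 tr201 tr202 tr203 tr204 tr205 tr206 tr207 tr208 tr209 tr210 nw211 by (smt (verit))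
      qed
      have cs212: False if "E a1 y13 \<and> E a2 y13 \<and> E c0 y13 \<and> E d y13" proof -
        from that have e213: "E a1 y13" and e214: "E a2 y13" and e215: "E c0 y13" and e216: "E d y13" by blast+
        obtain w217 where w217V: "w217 \<in> V" and cnt218: "5 \<le> sum_list (map (\<lambda>x. if E x w217 then 1::int else 0) [a0, a1, a2, b0, b1, b2, c0, c2, d, y11, y12, y13])"
          using g_D[OF G, of "[a0, a1, a2, b0, b1, b2, c0, c2, d, y11, y12, y13]" 4] V(1) V(2) V(3) V(4) V(5) V(6) V(7) V(9) dV y11V y12V y13V by auto
        have cs219: "5 \<le> (if E a0 w217 then 1::int else 0) + ((if E a1 w217 then 1::int else 0) + ((if E a2 w217 then 1::int else 0) + ((if E b0 w217 then 1::int else 0) + ((if E b1 w217 then 1::int else 0) + ((if E b2 w217 then 1::int else 0) + ((if E c0 w217 then 1::int else 0) + ((if E c2 w217 then 1::int else 0) + ((if E d w217 then 1::int else 0) + ((if E y11 w217 then 1::int else 0) + ((if E y12 w217 then 1::int else 0) + ((if E y13 w217 then 1::int else 0))))))))))))" using cnt218 by simp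
        have tr220: "\<not> (E a0 w217 \<and> E b1 w217)" using g_tri[OF G N(3)] by blast
        have tr221: "\<not> (E a0 w217 \<and> E b2 w217)" using g_tri[OF G N(4)] by blast
        have tr222: "\<not> (E a0 w217 \<and> E c0 w217)" using g_tri[OF G N(1)] by blast
        have tr223: "\<not> (E a1 w217 \<and> E b0 w217)" using g_tri[OF G N(7)] by blast
        have tr224: "\<not> (E a1 w217 \<and> E b2 w217)" using g_tri[OF G N(8)] by blast
        have tr225: "\<not> (E a1 w217 \<and> E y11 w217)" using g_tri[OF G e23] by blast
        have tr226: "\<not> (E a1 w217 \<and> E y13 w217)" using g_tri[OF G e213] by blast
        have tr227: "\<not> (E a2 w217 \<and> E b0 w217)" using g_tri[OF G N(11)] by blast
        have tr228: "\<not> (E a2 w217 \<and> E b1 w217)" using g_tri[OF G N(12)] by blast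
        have tr229: "\<not> (E a2 w217 \<and> E c2 w217)" using g_tri[OF G N(9)] by blast
        have tr230: "\<not> (E a2 w217 \<and> E y13 w217)" using g_tri[OF G e214] by blast
        have tr231: "\<not> (E b0 w217 \<and> E c0 w217)" using g_tri[OF G N(2)] by blast
        have tr232: "\<not> (E b0 w217 \<and> E y12 w217)" using g_tri[OF G e160] by blast
        have tr233: "\<not> (E b1 w217 \<and> E y11 w217)" using g_tri[OF G e24] by blast
        have tr234: "\<not> (E b1 w217 \<and> E y12 w217)" using g_tri[OF G e161] by blast
        have tr235: "\<not> (E b2 w217 \<and> E c2 w217)" using g_tri[OF G N(10)] by blast
        have tr236: "\<not> (E b2 w217 \<and> E y12 w217)" using g_tri[OF G e162] by blast
        have tr237: "\<not> (E c0 w217 \<and> E y11 w217)" using g_tri[OF G e25] by blast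
        have tr238: "\<not> (E c0 w217 \<and> E y13 w217)" using g_tri[OF G e215] by blast
        have tr239: "\<not> (E c2 w217 \<and> E d w217)" using g_tri[OF G ez2] by blast
        have tr240: "\<not> (E c2 w217 \<and> E y11 w217)" using g_tri[OF G e26] by blast
        have tr241: "\<not> (E d w217 \<and> E y12 w217)" using g_tri[OF G e163] by blast
        have tr242: "\<not> (E d w217 \<and> E y13 w217)" using g_tri[OF G e216] by blast
        show False using cs219 tr220 tr221 tr222 tr223 tr224 tr225 tr226 tr227 tr228 tr229 tr230 tr231 tr232 tr233 tr234 tr235 tr236 tr237 tr238 tr239 tr240 tr241 tr242 by (smt (verit))
      qed
      have cs243: False if "E a2 y13 \<and> E b2 y13 \<and> E c0 y13 \<and> E d y13" proof -
        from that have e244: "E a2 y13" and e245: "E b2 y13" and e246: "E c0 y13" and e247: "E d y13" by blast+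
        obtain w248 where w248V: "w248 \<in> V" and cnt249: "5 \<le> sum_list (map (\<lambda>x. if E x w248 then 1::int else 0) [a1, a2, b0, b1, b2, c0, c1, c2, d, y11, y12, y13])"
          using g_D[OF G, of "[a1, a2, b0, b1, b2, c0, c1, c2, d, y11, y12, y13]" 4] V(2) V(3) V(4) V(5) V(6) V(7) V(8) V(9) dV y11V y12V y13V by auto
        have cs250: "5 \<le> (if E a1 w248 then 1::int else 0) + ((if E a2 w248 then 1::int else 0) + ((if E b0 w248 then 1::int else 0) + ((if E b1 w248 then 1::int else 0) + ((if E b2 w248 then 1::int else 0) + ((if E c0 w248 then 1::int else 0) + ((if E c1 w248 then 1::int else 0) + ((if E c2 w248 then 1::int else 0) + ((if E d w248 then 1::int else 0) + ((if E y11 w248 then 1::int else 0) + ((if E y12 w248 then 1::int else 0) + ((if E y13 w248 then 1::int else 0))))))))))))" using cnt249 by simp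
        have tr251: "\<not> (E a1 w248 \<and> E b0 w248)" using g_tri[OF G N(7)] by blast
        have tr252: "\<not> (E a1 w248 \<and> E b2 w248)" using g_tri[OF G N(8)] by blast
        have tr253: "\<not> (E a1 w248 \<and> E c1 w248)" using g_tri[OF G N(5)] by blast
        have tr254: "\<not> (E a1 w248 \<and> E y11 w248)" using g_tri[OF G e23] by blast
        have tr255: "\<not> (E a2 w248 \<and> E b0 w248)" using g_tri[OF G N(11)] by blast
        have tr256: "\<not> (E a2 w248 \<and> E b1 w248)" using g_tri[OF G N(12)] by blast
        have tr257: "\<not> (E a2 w248 \<and> E c2 w248)" using g_tri[OF G N(9)] by blast
        have tr258: "\<not> (E a2 w248 \<and> E y13 w248)" using g_tri[OF G e244] by blast
        have tr259: "\<not> (E b0 w248 \<and> E c0 w248)" using g_tri[OF G N(2)] by blast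
        have tr260: "\<not> (E b0 w248 \<and> E y12 w248)" using g_tri[OF G e160] by blast
        have tr261: "\<not> (E b1 w248 \<and> E c1 w248)" using g_tri[OF G N(6)] by blast
        have tr262: "\<not> (E b1 w248 \<and> E y11 w248)" using g_tri[OF G e24] by blast
        have tr263: "\<not> (E b1 w248 \<and> E y12 w248)" using g_tri[OF G e161] by blast
        have tr264: "\<not> (E b2 w248 \<and> E c2 w248)" using g_tri[OF G N(10)] by blast
        have tr265: "\<not> (E b2 w248 \<and> E y12 w248)" using g_tri[OF G e162] by blast
        have tr266: "\<not> (E b2 w248 \<and> E y13 w248)" using g_tri[OF G e245] by blast
        have tr267: "\<not> (E c0 w248 \<and> E c1 w248)" using g_tri[OF G e01] by blast
        have tr268: "\<not> (E c0 w248 \<and> E y11 w248)" using g_tri[OF G e25] by blast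
        have tr269: "\<not> (E c0 w248 \<and> E y13 w248)" using g_tri[OF G e246] by blast
        have tr270: "\<not> (E c1 w248 \<and> E d w248)" using g_tri[OF G ez1] by blast
        have tr271: "\<not> (E c2 w248 \<and> E d w248)" using g_tri[OF G ez2] by blast
        have tr272: "\<not> (E c2 w248 \<and> E y11 w248)" using g_tri[OF G e26] by blast
        have tr273: "\<not> (E d w248 \<and> E y12 w248)" using g_tri[OF G e163] by blast
        have tr274: "\<not> (E d w248 \<and> E y13 w248)" using g_tri[OF G e247] by blast
        show False using cs250 tr251 tr252 tr253 tr254 tr255 tr256 tr257 tr258 tr259 tr260 tr261 tr262 tr263 tr264 tr265 tr266 tr267 tr268 tr269 tr270 tr271 tr272 tr273 tr274 by (smt (verit))
      qed
      show False using br179 cs180 cs212 cs243 by blast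
    qed
    show False using br42 cs43 cs159 by blast
  qed
  show False using br21 cs22 by blast
qed

lemma caseC:
  assumes G: "in_D4 V E"
  and V: "a0 \<in> V" "a1 \<in> V" "a2 \<in> V" "b0 \<in> V" "b1 \<in> V" "b2 \<in> V" "c0 \<in> V" "c1 \<in> V" "c2 \<in> V"
  and N: "E a0 c0" "E b0 c0" "E a0 b1" "E a0 b2" "E a1 c1" "E b1 c1" "E a1 b0" "E a1 b2" "E a2 c2" "E b2 c2" "E a2 b0" "E a2 b1"
  and nw: "\<not> (\<exists>w\<in>V. E w a0 \<and> E w b0 \<and> E w c2 \<and> E w c1)"
  and e01: "\<not> E c0 c1"
  and e02: "\<not> E c0 c2"
  and e12: "\<not> E c1 c2"
  and n01: "c0 \<noteq> c1"
  and n02: "c0 \<noteq> c2"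
  and n12: "c1 \<noteq> c2"
  shows False
proof -
  obtain d where dV: "d \<in> V" and ez275: "E c1 d" and ez276: "E d c2" using g_max[OF G V(8) V(9) n12 e12] by blast
  obtain e where eV: "e \<in> V" and ez277: "E c0 e" and ez278: "E e c2" using g_max[OF G V(7) V(9) n02 e02] by blast
  obtain f where fV: "f \<in> V" and ez279: "E c0 f" and ez280: "E f c1" using g_max[OF G V(7) V(8) n01 e01] by blast
  obtain y12 where y12V: "y12 \<in> V" and cnt281: "4 \<le> sum_list (map (\<lambda>x. if E x y12 then 1::int else 0) [a0, a1, a2, b0, b1, b2, c0, c1, c2])"
    using g_D[OF G, of "[a0, a1, a2, b0, b1, b2, c0, c1, c2]" 3] V(1) V(2) V(3) V(4) V(5) V(6) V(7) V(8) V(9) by auto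
  have cs282: "4 \<le> (if E a0 y12 then 1::int else 0) + ((if E a1 y12 then 1::int else 0) + ((if E a2 y12 then 1::int else 0) + ((if E b0 y12 then 1::int else 0) + ((if E b1 y12 then 1::int else 0) + ((if E b2 y12 then 1::int else 0) + ((if E c0 y12 then 1::int else 0) + ((if E c1 y12 then 1::int else 0) + ((if E c2 y12 then 1::int else 0)))))))))" using cnt281 by simp
  have tr283: "\<not> (E a0 y12 \<and> E b1 y12)" using g_tri[OF G N(3)] by blast
  have tr284: "\<not> (E a0 y12 \<and> E b2 y12)" using g_tri[OF G N(4)] by blast
  have tr285: "\<not> (E a0 y12 \<and> E c0 y12)" using g_tri[OF G N(1)] by blast
  have tr286: "\<not> (E a1 y12 \<and> E b0 y12)" using g_tri[OF G N(7)] by blast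
  have tr287: "\<not> (E a1 y12 \<and> E b2 y12)" using g_tri[OF G N(8)] by blast
  have tr288: "\<not> (E a1 y12 \<and> E c1 y12)" using g_tri[OF G N(5)] by blast
  have tr289: "\<not> (E a2 y12 \<and> E b0 y12)" using g_tri[OF G N(11)] by blast
  have tr290: "\<not> (E a2 y12 \<and> E b1 y12)" using g_tri[OF G N(12)] by blast
  have tr291: "\<not> (E a2 y12 \<and> E c2 y12)" using g_tri[OF G N(9)] by blast
  have tr292: "\<not> (E b0 y12 \<and> E c0 y12)" using g_tri[OF G N(2)] by blast
  have tr293: "\<not> (E b1 y12 \<and> E c1 y12)" using g_tri[OF G N(6)] by blast
  have tr294: "\<not> (E b2 y12 \<and> E c2 y12)" using g_tri[OF G N(10)] by blast
  have nw295: "\<not> (E a0 y12 \<and> E b0 y12 \<and> E c2 y12 \<and> E c1 y12)" using nw y12V g_sym[OF G] by blast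
  have br296: "(E a1 y12 \<and> E b1 y12 \<and> E c0 y12 \<and> E c2 y12) \<or> (E a2 y12 \<and> E b2 y12 \<and> E c0 y12 \<and> E c1 y12)" using cs282 tr283 tr284 tr285 tr286 tr287 tr288 tr289 tr290 tr291 tr292 tr293 tr294 nw295 by (smt (verit))
  have cs297: False if "E a1 y12 \<and> E b1 y12 \<and> E c0 y12 \<and> E c2 y12" proof -
    from that have e298: "E a1 y12" and e299: "E b1 y12" and e300: "E c0 y12" and e301: "E c2 y12" by blast+
    obtain y13 where y13V: "y13 \<in> V" and cnt302: "4 \<le> sum_list (map (\<lambda>x. if E x y13 then 1::int else 0) [a0, a1, a2, b0, b1, b2, c1, c2, d])"
      using g_D[OF G, of "[a0, a1, a2, b0, b1, b2, c1, c2, d]" 3] V(1) V(2) V(3) V(4) V(5) V(6) V(8) V(9) dV by auto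
    have cs303: "4 \<le> (if E a0 y13 then 1::int else 0) + ((if E a1 y13 then 1::int else 0) + ((if E a2 y13 then 1::int else 0) + ((if E b0 y13 then 1::int else 0) + ((if E b1 y13 then 1::int else 0) + ((if E b2 y13 then 1::int else 0) + ((if E c1 y13 then 1::int else 0) + ((if E c2 y13 then 1::int else 0) + ((if E d y13 then 1::int else 0)))))))))" using cnt302 by simp
    have tr304: "\<not> (E a0 y13 \<and> E b1 y13)" using g_tri[OF G N(3)] by blast
    have tr305: "\<not> (E a0 y13 \<and> E b2 y13)" using g_tri[OF G N(4)] by blast
    have tr306: "\<not> (E a1 y13 \<and> E b0 y13)" using g_tri[OF G N(7)] by blast
    have tr307: "\<not> (E a1 y13 \<and> E b2 y13)" using g_tri[OF G N(8)] by blast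
    have tr308: "\<not> (E a1 y13 \<and> E c1 y13)" using g_tri[OF G N(5)] by blast
    have tr309: "\<not> (E a2 y13 \<and> E b0 y13)" using g_tri[OF G N(11)] by blast
    have tr310: "\<not> (E a2 y13 \<and> E b1 y13)" using g_tri[OF G N(12)] by blast
    have tr311: "\<not> (E a2 y13 \<and> E c2 y13)" using g_tri[OF G N(9)] by blast
    have tr312: "\<not> (E b1 y13 \<and> E c1 y13)" using g_tri[OF G N(6)] by blast
    have tr313: "\<not> (E b2 y13 \<and> E c2 y13)" using g_tri[OF G N(10)] by blast
    have tr314: "\<not> (E c1 y13 \<and> E d y13)" using g_tri[OF G ez275] by blast
    have tr315: "\<not> (E c2 y13 \<and> E d y13)" using g_tri[OF G ez276] by blast
    have nw316: "\<not> (E a0 y13 \<and> E b0 y13 \<and> E c2 y13 \<and> E c1 y13)" using nw y13V g_sym[OF G] by blast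
    have br317: "(E a0 y13 \<and> E a1 y13 \<and> E a2 y13 \<and> E d y13) \<or> (E b0 y13 \<and> E b1 y13 \<and> E b2 y13 \<and> E d y13)" using cs303 tr304 tr305 tr306 tr307 tr308 tr309 tr310 tr311 tr312 tr313 tr314 tr315 nw316 by (smt (verit))
    have cs318: False if "E a0 y13 \<and> E a1 y13 \<and> E a2 y13 \<and> E d y13" proof -
      from that have e319: "E a0 y13" and e320: "E a1 y13" and e321: "E a2 y13" and e322: "E d y13" by blast+
      obtain y14 where y14V: "y14 \<in> V" and cnt323: "4 \<le> sum_list (map (\<lambda>x. if E x y14 then 1::int else 0) [a0, a1, a2, b0, b1, c0, c1, f, y13])"
        using g_D[OF G, of "[a0, a1, a2, b0, b1, c0, c1, f, y13]" 3] V(1) V(2) V(3) V(4) V(5) V(7) V(8) fV y13V by auto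
      have cs324: "4 \<le> (if E a0 y14 then 1::int else 0) + ((if E a1 y14 then 1::int else 0) + ((if E a2 y14 then 1::int else 0) + ((if E b0 y14 then 1::int else 0) + ((if E b1 y14 then 1::int else 0) + ((if E c0 y14 then 1::int else 0) + ((if E c1 y14 then 1::int else 0) + ((if E f y14 then 1::int else 0) + ((if E y13 y14 then 1::int else 0)))))))))" using cnt323 by simp
      have tr325: "\<not> (E a0 y14 \<and> E b1 y14)" using g_tri[OF G N(3)] by blast
      have tr326: "\<not> (E a0 y14 \<and> E c0 y14)" using g_tri[OF G N(1)] by blast
      have tr327: "\<not> (E a0 y14 \<and> E y13 y14)" using g_tri[OF G e319] by blast
      have tr328: "\<not> (E a1 y14 \<and> E b0 y14)" using g_tri[OF G N(7)] by blast
      have tr329: "\<not> (E a1 y14 \<and> E c1 y14)" using g_tri[OF G N(5)] by blast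
      have tr330: "\<not> (E a1 y14 \<and> E y13 y14)" using g_tri[OF G e320] by blast
      have tr331: "\<not> (E a2 y14 \<and> E b0 y14)" using g_tri[OF G N(11)] by blast
      have tr332: "\<not> (E a2 y14 \<and> E b1 y14)" using g_tri[OF G N(12)] by blast
      have tr333: "\<not> (E a2 y14 \<and> E y13 y14)" using g_tri[OF G e321] by blast
      have tr334: "\<not> (E b0 y14 \<and> E c0 y14)" using g_tri[OF G N(2)] by blast
      have tr335: "\<not> (E b1 y14 \<and> E c1 y14)" using g_tri[OF G N(6)] by blast
      have tr336: "\<not> (E c0 y14 \<and> E f y14)" using g_tri[OF G ez279] by blast
      have tr337: "\<not> (E c1 y14 \<and> E f y14)" using g_tri[OF G ez280] by blast
      have br338: "(E a0 y14 \<and> E a1 y14 \<and> E a2 y14 \<and> E f y14) \<or> (E b0 y14 \<and> E b1 y14 \<and> E f y14 \<and> E y13 y14)" using cs324 tr325 tr326 tr327 tr328 tr329 tr330 tr331 tr332 tr333 tr334 tr335 tr336 tr337 by (smt (verit))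
      have cs339: False if "E a0 y14 \<and> E a1 y14 \<and> E a2 y14 \<and> E f y14" proof -
        from that have e340: "E a0 y14" and e341: "E a1 y14" and e342: "E a2 y14" and e343: "E f y14" by blast+
        obtain y15 where y15V: "y15 \<in> V" and cnt344: "3 \<le> sum_list (map (\<lambda>x. if E x y15 then 1::int else 0) [a0, a2, b0, b2, c0, c2])"
          using g_D[OF G, of "[a0, a2, b0, b2, c0, c2]" 2] V(1) V(3) V(4) V(6) V(7) V(9) by auto
        have cs345: "3 \<le> (if E a0 y15 then 1::int else 0) + ((if E a2 y15 then 1::int else 0) + ((if E b0 y15 then 1::int else 0) + ((if E b2 y15 then 1::int else 0) + ((if E c0 y15 then 1::int else 0) + ((if E c2 y15 then 1::int else 0))))))" using cnt344 by simp
        have tr346: "\<not> (E a0 y15 \<and> E b2 y15)" using g_tri[OF G N(4)] by blast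
        have tr347: "\<not> (E a0 y15 \<and> E c0 y15)" using g_tri[OF G N(1)] by blast
        have tr348: "\<not> (E a2 y15 \<and> E b0 y15)" using g_tri[OF G N(11)] by blast
        have tr349: "\<not> (E a2 y15 \<and> E c2 y15)" using g_tri[OF G N(9)] by blast
        have tr350: "\<not> (E b0 y15 \<and> E c0 y15)" using g_tri[OF G N(2)] by blast
        have tr351: "\<not> (E b2 y15 \<and> E c2 y15)" using g_tri[OF G N(10)] by blast
        have br352: "(E a0 y15 \<and> E b0 y15 \<and> E c2 y15) \<or> (E a2 y15 \<and> E b2 y15 \<and> E c0 y15)" using cs345 tr346 tr347 tr348 tr349 tr350 tr351 by (smt (verit))
        have cs353: False if "E a0 y15 \<and> E b0 y15 \<and> E c2 y15" proof -
          from that have e354: "E a0 y15" and e355: "E b0 y15" and e356: "E c2 y15" by blast+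
          obtain w357 where w357V: "w357 \<in> V" and cnt358: "5 \<le> sum_list (map (\<lambda>x. if E x w357 then 1::int else 0) [a0, a1, a2, b0, b1, c0, c1, c2, f, y12, y14, y15])"
            using g_D[OF G, of "[a0, a1, a2, b0, b1, c0, c1, c2, f, y12, y14, y15]" 4] V(1) V(2) V(3) V(4) V(5) V(7) V(8) V(9) fV y12V y14V y15V by auto
          have cs359: "5 \<le> (if E a0 w357 then 1::int else 0) + ((if E a1 w357 then 1::int else 0) + ((if E a2 w357 then 1::int else 0) + ((if E b0 w357 then 1::int else 0) + ((if E b1 w357 then 1::int else 0) + ((if E c0 w357 then 1::int else 0) + ((if E c1 w357 then 1::int else 0) + ((if E c2 w357 then 1::int else 0) + ((if E f w357 then 1::int else 0) + ((if E y12 w357 then 1::int else 0) + ((if E y14 w357 then 1::int else 0) + ((if E y15 w357 then 1::int else 0))))))))))))" using cnt358 by simp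
          have tr360: "\<not> (E a0 w357 \<and> E b1 w357)" using g_tri[OF G N(3)] by blast
          have tr361: "\<not> (E a0 w357 \<and> E c0 w357)" using g_tri[OF G N(1)] by blast
          have tr362: "\<not> (E a0 w357 \<and> E y14 w357)" using g_tri[OF G e340] by blast
          have tr363: "\<not> (E a0 w357 \<and> E y15 w357)" using g_tri[OF G e354] by blast
          have tr364: "\<not> (E a1 w357 \<and> E b0 w357)" using g_tri[OF G N(7)] by blast
          have tr365: "\<not> (E a1 w357 \<and> E c1 w357)" using g_tri[OF G N(5)] by blast
          have tr366: "\<not> (E a1 w357 \<and> E y12 w357)" using g_tri[OF G e298] by blast
          have tr367: "\<not> (E a1 w357 \<and> E y14 w357)" using g_tri[OF G e341] by blast
          have tr368: "\<not> (E a2 w357 \<and> E b0 w357)" using g_tri[OF G N(11)] by blast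
          have tr369: "\<not> (E a2 w357 \<and> E b1 w357)" using g_tri[OF G N(12)] by blast
          have tr370: "\<not> (E a2 w357 \<and> E c2 w357)" using g_tri[OF G N(9)] by blast
          have tr371: "\<not> (E a2 w357 \<and> E y14 w357)" using g_tri[OF G e342] by blast
          have tr372: "\<not> (E b0 w357 \<and> E c0 w357)" using g_tri[OF G N(2)] by blast
          have tr373: "\<not> (E b0 w357 \<and> E y15 w357)" using g_tri[OF G e355] by blast
          have tr374: "\<not> (E b1 w357 \<and> E c1 w357)" using g_tri[OF G N(6)] by blast
          have tr375: "\<not> (E b1 w357 \<and> E y12 w357)" using g_tri[OF G e299] by blast
          have tr376: "\<not> (E c0 w357 \<and> E f w357)" using g_tri[OF G ez279] by blast
          have tr377: "\<not> (E c0 w357 \<and> E y12 w357)" using g_tri[OF G e300] by blast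
          have tr378: "\<not> (E c1 w357 \<and> E f w357)" using g_tri[OF G ez280] by blast
          have tr379: "\<not> (E c2 w357 \<and> E y12 w357)" using g_tri[OF G e301] by blast
          have tr380: "\<not> (E c2 w357 \<and> E y15 w357)" using g_tri[OF G e356] by blast
          have tr381: "\<not> (E f w357 \<and> E y14 w357)" using g_tri[OF G e343] by blast
          have nw382: "\<not> (E a0 w357 \<and> E b0 w357 \<and> E c2 w357 \<and> E c1 w357)" using nw w357V g_sym[OF G] by blast
          show False using cs359 tr360 tr361 tr362 tr363 tr364 tr365 tr366 tr367 tr368 tr369 tr370 tr371 tr372 tr373 tr374 tr375 tr376 tr377 tr378 tr379 tr380 tr381 nw382 by (smt (verit))
        qed
        have cs383: False if "E a2 y15 \<and> E b2 y15 \<and> E c0 y15" proof -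
          from that have e384: "E a2 y15" and e385: "E b2 y15" and e386: "E c0 y15" by blast+
          obtain w387 where w387V: "w387 \<in> V" and cnt388: "5 \<le> sum_list (map (\<lambda>x. if E x w387 then 1::int else 0) [a0, a1, a2, b1, b2, c0, c1, c2, d, y12, y13, y15])"
            using g_D[OF G, of "[a0, a1, a2, b1, b2, c0, c1, c2, d, y12, y13, y15]" 4] V(1) V(2) V(3) V(5) V(6) V(7) V(8) V(9) dV y12V y13V y15V by auto
          have cs389: "5 \<le> (if E a0 w387 then 1::int else 0) + ((if E a1 w387 then 1::int else 0) + ((if E a2 w387 then 1::int else 0) + ((if E b1 w387 then 1::int else 0) + ((if E b2 w387 then 1::int else 0) + ((if E c0 w387 then 1::int else 0) + ((if E c1 w387 then 1::int else 0) + ((if E c2 w387 then 1::int else 0) + ((if E d w387 then 1::int else 0) + ((if E y12 w387 then 1::int else 0) + ((if E y13 w387 then 1::int else 0) + ((if E y15 w387 then 1::int else 0))))))))))))" using cnt388 by simp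
          have tr390: "\<not> (E a0 w387 \<and> E b1 w387)" using g_tri[OF G N(3)] by blast
          have tr391: "\<not> (E a0 w387 \<and> E b2 w387)" using g_tri[OF G N(4)] by blast
          have tr392: "\<not> (E a0 w387 \<and> E c0 w387)" using g_tri[OF G N(1)] by blast
          have tr393: "\<not> (E a0 w387 \<and> E y13 w387)" using g_tri[OF G e319] by blast
          have tr394: "\<not> (E a1 w387 \<and> E b2 w387)" using g_tri[OF G N(8)] by blast
          have tr395: "\<not> (E a1 w387 \<and> E c1 w387)" using g_tri[OF G N(5)] by blast
          have tr396: "\<not> (E a1 w387 \<and> E y12 w387)" using g_tri[OF G e298] by blast
          have tr397: "\<not> (E a1 w387 \<and> E y13 w387)" using g_tri[OF G e320] by blast
          have tr398: "\<not> (E a2 w387 \<and> E b1 w387)" using g_tri[OF G N(12)] by blast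
          have tr399: "\<not> (E a2 w387 \<and> E c2 w387)" using g_tri[OF G N(9)] by blast
          have tr400: "\<not> (E a2 w387 \<and> E y13 w387)" using g_tri[OF G e321] by blast
          have tr401: "\<not> (E a2 w387 \<and> E y15 w387)" using g_tri[OF G e384] by blast
          have tr402: "\<not> (E b1 w387 \<and> E c1 w387)" using g_tri[OF G N(6)] by blast
          have tr403: "\<not> (E b1 w387 \<and> E y12 w387)" using g_tri[OF G e299] by blast
          have tr404: "\<not> (E b2 w387 \<and> E c2 w387)" using g_tri[OF G N(10)] by blast
          have tr405: "\<not> (E b2 w387 \<and> E y15 w387)" using g_tri[OF G e385] by blast
          have tr406: "\<not> (E c0 w387 \<and> E y12 w387)" using g_tri[OF G e300] by blast
          have tr407: "\<not> (E c0 w387 \<and> E y15 w387)" using g_tri[OF G e386] by blast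
          have tr408: "\<not> (E c1 w387 \<and> E d w387)" using g_tri[OF G ez275] by blast
          have tr409: "\<not> (E c2 w387 \<and> E d w387)" using g_tri[OF G ez276] by blast
          have tr410: "\<not> (E c2 w387 \<and> E y12 w387)" using g_tri[OF G e301] by blast
          have tr411: "\<not> (E d w387 \<and> E y13 w387)" using g_tri[OF G e322] by blast
          show False using cs389 tr390 tr391 tr392 tr393 tr394 tr395 tr396 tr397 tr398 tr399 tr400 tr401 tr402 tr403 tr404 tr405 tr406 tr407 tr408 tr409 tr410 tr411 by (smt (verit))
        qed
        show False using br352 cs353 cs383 by blast
      qed
      have cs412: False if "E b0 y14 \<and> E b1 y14 \<and> E f y14 \<and> E y13 y14" proof -
        from that have e413: "E b0 y14" and e414: "E b1 y14" and e415: "E f y14" and e416: "E y13 y14" by blast+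
        obtain w417 where w417V: "w417 \<in> V" and cnt418: "5 \<le> sum_list (map (\<lambda>x. if E x w417 then 1::int else 0) [a0, a1, b1, b2, c0, c1, c2, d, f, y12, y13, y14])"
          using g_D[OF G, of "[a0, a1, b1, b2, c0, c1, c2, d, f, y12, y13, y14]" 4] V(1) V(2) V(5) V(6) V(7) V(8) V(9) dV fV y12V y13V y14V by auto
        have cs419: "5 \<le> (if E a0 w417 then 1::int else 0) + ((if E a1 w417 then 1::int else 0) + ((if E b1 w417 then 1::int else 0) + ((if E b2 w417 then 1::int else 0) + ((if E c0 w417 then 1::int else 0) + ((if E c1 w417 then 1::int else 0) + ((if E c2 w417 then 1::int else 0) + ((if E d w417 then 1::int else 0) + ((if E f w417 then 1::int else 0) + ((if E y12 w417 then 1::int else 0) + ((if E y13 w417 then 1::int else 0) + ((if E y14 w417 then 1::int else 0))))))))))))" using cnt418 by simp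
        have tr420: "\<not> (E a0 w417 \<and> E b1 w417)" using g_tri[OF G N(3)] by blast
        have tr421: "\<not> (E a0 w417 \<and> E b2 w417)" using g_tri[OF G N(4)] by blast
        have tr422: "\<not> (E a0 w417 \<and> E c0 w417)" using g_tri[OF G N(1)] by blast
        have tr423: "\<not> (E a0 w417 \<and> E y13 w417)" using g_tri[OF G e319] by blast
        have tr424: "\<not> (E a1 w417 \<and> E b2 w417)" using g_tri[OF G N(8)] by blast
        have tr425: "\<not> (E a1 w417 \<and> E c1 w417)" using g_tri[OF G N(5)] by blast
        have tr426: "\<not> (E a1 w417 \<and> E y12 w417)" using g_tri[OF G e298] by blast
        have tr427: "\<not> (E a1 w417 \<and> E y13 w417)" using g_tri[OF G e320] by blast
        have tr428: "\<not> (E b1 w417 \<and> E c1 w417)" using g_tri[OF G N(6)] by blast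
        have tr429: "\<not> (E b1 w417 \<and> E y12 w417)" using g_tri[OF G e299] by blast
        have tr430: "\<not> (E b1 w417 \<and> E y14 w417)" using g_tri[OF G e414] by blast
        have tr431: "\<not> (E b2 w417 \<and> E c2 w417)" using g_tri[OF G N(10)] by blast
        have tr432: "\<not> (E c0 w417 \<and> E f w417)" using g_tri[OF G ez279] by blast
        have tr433: "\<not> (E c0 w417 \<and> E y12 w417)" using g_tri[OF G e300] by blast
        have tr434: "\<not> (E c1 w417 \<and> E d w417)" using g_tri[OF G ez275] by blast
        have tr435: "\<not> (E c1 w417 \<and> E f w417)" using g_tri[OF G ez280] by blast
        have tr436: "\<not> (E c2 w417 \<and> E d w417)" using g_tri[OF G ez276] by blast
        have tr437: "\<not> (E c2 w417 \<and> E y12 w417)" using g_tri[OF G e301] by blast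
        have tr438: "\<not> (E d w417 \<and> E y13 w417)" using g_tri[OF G e322] by blast
        have tr439: "\<not> (E f w417 \<and> E y14 w417)" using g_tri[OF G e415] by blast
        have tr440: "\<not> (E y13 w417 \<and> E y14 w417)" using g_tri[OF G e416] by blast
        show False using cs419 tr420 tr421 tr422 tr423 tr424 tr425 tr426 tr427 tr428 tr429 tr430 tr431 tr432 tr433 tr434 tr435 tr436 tr437 tr438 tr439 tr440 by (smt (verit))
      qed
      show False using br338 cs339 cs412 by blast
    qed
    have cs441: False if "E b0 y13 \<and> E b1 y13 \<and> E b2 y13 \<and> E d y13" proof -
      from that have e442: "E b0 y13" and e443: "E b1 y13" and e444: "E b2 y13" and e445: "E d y13" by blast+
      obtain y14 where y14V: "y14 \<in> V" and cnt446: "4 \<le> sum_list (map (\<lambda>x. if E x y14 then 1::int else 0) [a0, a1, b0, b1, b2, c0, c1, f, y13])"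
        using g_D[OF G, of "[a0, a1, b0, b1, b2, c0, c1, f, y13]" 3] V(1) V(2) V(4) V(5) V(6) V(7) V(8) fV y13V by auto
      have cs447: "4 \<le> (if E a0 y14 then 1::int else 0) + ((if E a1 y14 then 1::int else 0) + ((if E b0 y14 then 1::int else 0) + ((if E b1 y14 then 1::int else 0) + ((if E b2 y14 then 1::int else 0) + ((if E c0 y14 then 1::int else 0) + ((if E c1 y14 then 1::int else 0) + ((if E f y14 then 1::int else 0) + ((if E y13 y14 then 1::int else 0)))))))))" using cnt446 by simp
      have tr448: "\<not> (E a0 y14 \<and> E b1 y14)" using g_tri[OF G N(3)] by blast
      have tr449: "\<not> (E a0 y14 \<and> E b2 y14)" using g_tri[OF G N(4)] by blast
      have tr450: "\<not> (E a0 y14 \<and> E c0 y14)" using g_tri[OF G N(1)] by blast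
      have tr451: "\<not> (E a1 y14 \<and> E b0 y14)" using g_tri[OF G N(7)] by blast
      have tr452: "\<not> (E a1 y14 \<and> E b2 y14)" using g_tri[OF G N(8)] by blast
      have tr453: "\<not> (E a1 y14 \<and> E c1 y14)" using g_tri[OF G N(5)] by blast
      have tr454: "\<not> (E b0 y14 \<and> E c0 y14)" using g_tri[OF G N(2)] by blast
      have tr455: "\<not> (E b0 y14 \<and> E y13 y14)" using g_tri[OF G e442] by blast
      have tr456: "\<not> (E b1 y14 \<and> E c1 y14)" using g_tri[OF G N(6)] by blast
      have tr457: "\<not> (E b1 y14 \<and> E y13 y14)" using g_tri[OF G e443] by blast
      have tr458: "\<not> (E b2 y14 \<and> E y13 y14)" using g_tri[OF G e444] by blast
      have tr459: "\<not> (E c0 y14 \<and> E f y14)" using g_tri[OF G ez279] by blast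
      have tr460: "\<not> (E c1 y14 \<and> E f y14)" using g_tri[OF G ez280] by blast
      have br461: "(E a0 y14 \<and> E a1 y14 \<and> E f y14 \<and> E y13 y14) \<or> (E b0 y14 \<and> E b1 y14 \<and> E b2 y14 \<and> E f y14)" using cs447 tr448 tr449 tr450 tr451 tr452 tr453 tr454 tr455 tr456 tr457 tr458 tr459 tr460 by (smt (verit))
      have cs462: False if "E a0 y14 \<and> E a1 y14 \<and> E f y14 \<and> E y13 y14" proof -
        from that have e463: "E a0 y14" and e464: "E a1 y14" and e465: "E f y14" and e466: "E y13 y14" by blast+
        obtain w467 where w467V: "w467 \<in> V" and cnt468: "5 \<le> sum_list (map (\<lambda>x. if E x w467 then 1::int else 0) [a1, a2, b0, b1, c0, c1, c2, d, f, y12, y13, y14])"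
          using g_D[OF G, of "[a1, a2, b0, b1, c0, c1, c2, d, f, y12, y13, y14]" 4] V(2) V(3) V(4) V(5) V(7) V(8) V(9) dV fV y12V y13V y14V by auto
        have cs469: "5 \<le> (if E a1 w467 then 1::int else 0) + ((if E a2 w467 then 1::int else 0) + ((if E b0 w467 then 1::int else 0) + ((if E b1 w467 then 1::int else 0) + ((if E c0 w467 then 1::int else 0) + ((if E c1 w467 then 1::int else 0) + ((if E c2 w467 then 1::int else 0) + ((if E d w467 then 1::int else 0) + ((if E f w467 then 1::int else 0) + ((if E y12 w467 then 1::int else 0) + ((if E y13 w467 then 1::int else 0) + ((if E y14 w467 then 1::int else 0))))))))))))" using cnt468 by simp
        have tr470: "\<not> (E a1 w467 \<and> E b0 w467)" using g_tri[OF G N(7)] by blast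
        have tr471: "\<not> (E a1 w467 \<and> E c1 w467)" using g_tri[OF G N(5)] by blast
        have tr472: "\<not> (E a1 w467 \<and> E y12 w467)" using g_tri[OF G e298] by blast
        have tr473: "\<not> (E a1 w467 \<and> E y14 w467)" using g_tri[OF G e464] by blast
        have tr474: "\<not> (E a2 w467 \<and> E b0 w467)" using g_tri[OF G N(11)] by blast
        have tr475: "\<not> (E a2 w467 \<and> E b1 w467)" using g_tri[OF G N(12)] by blast
        have tr476: "\<not> (E a2 w467 \<and> E c2 w467)" using g_tri[OF G N(9)] by blast
        have tr477: "\<not> (E b0 w467 \<and> E c0 w467)" using g_tri[OF G N(2)] by blast
        have tr478: "\<not> (E b0 w467 \<and> E y13 w467)" using g_tri[OF G e442] by blast
        have tr479: "\<not> (E b1 w467 \<and> E c1 w467)" using g_tri[OF G N(6)] by blast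
        have tr480: "\<not> (E b1 w467 \<and> E y12 w467)" using g_tri[OF G e299] by blast
        have tr481: "\<not> (E b1 w467 \<and> E y13 w467)" using g_tri[OF G e443] by blast
        have tr482: "\<not> (E c0 w467 \<and> E f w467)" using g_tri[OF G ez279] by blast
        have tr483: "\<not> (E c0 w467 \<and> E y12 w467)" using g_tri[OF G e300] by blast
        have tr484: "\<not> (E c1 w467 \<and> E d w467)" using g_tri[OF G ez275] by blast
        have tr485: "\<not> (E c1 w467 \<and> E f w467)" using g_tri[OF G ez280] by blast
        have tr486: "\<not> (E c2 w467 \<and> E d w467)" using g_tri[OF G ez276] by blast
        have tr487: "\<not> (E c2 w467 \<and> E y12 w467)" using g_tri[OF G e301] by blast
        have tr488: "\<not> (E d w467 \<and> E y13 w467)" using g_tri[OF G e445] by blast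
        have tr489: "\<not> (E f w467 \<and> E y14 w467)" using g_tri[OF G e465] by blast
        have tr490: "\<not> (E y13 w467 \<and> E y14 w467)" using g_tri[OF G e466] by blast
        show False using cs469 tr470 tr471 tr472 tr473 tr474 tr475 tr476 tr477 tr478 tr479 tr480 tr481 tr482 tr483 tr484 tr485 tr486 tr487 tr488 tr489 tr490 by (smt (verit))
      qed
      have cs491: False if "E b0 y14 \<and> E b1 y14 \<and> E b2 y14 \<and> E f y14" proof -
        from that have e492: "E b0 y14" and e493: "E b1 y14" and e494: "E b2 y14" and e495: "E f y14" by blast+
        obtain y15 where y15V: "y15 \<in> V" and cnt496: "3 \<le> sum_list (map (\<lambda>x. if E x y15 then 1::int else 0) [a0, a1, b2, c0, c1, f])"
          using g_D[OF G, of "[a0, a1, b2, c0, c1, f]" 2] V(1) V(2) V(6) V(7) V(8) fV by auto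
        have cs497: "3 \<le> (if E a0 y15 then 1::int else 0) + ((if E a1 y15 then 1::int else 0) + ((if E b2 y15 then 1::int else 0) + ((if E c0 y15 then 1::int else 0) + ((if E c1 y15 then 1::int else 0) + ((if E f y15 then 1::int else 0))))))" using cnt496 by simp
        have tr498: "\<not> (E a0 y15 \<and> E b2 y15)" using g_tri[OF G N(4)] by blast
        have tr499: "\<not> (E a0 y15 \<and> E c0 y15)" using g_tri[OF G N(1)] by blast
        have tr500: "\<not> (E a1 y15 \<and> E b2 y15)" using g_tri[OF G N(8)] by blast
        have tr501: "\<not> (E a1 y15 \<and> E c1 y15)" using g_tri[OF G N(5)] by blast
        have tr502: "\<not> (E c0 y15 \<and> E f y15)" using g_tri[OF G ez279] by blast
        have tr503: "\<not> (E c1 y15 \<and> E f y15)" using g_tri[OF G ez280] by blast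
        have br504: "(E a0 y15 \<and> E a1 y15 \<and> E f y15) \<or> (E b2 y15 \<and> E c0 y15 \<and> E c1 y15)" using cs497 tr498 tr499 tr500 tr501 tr502 tr503 by (smt (verit))
        have cs505: False if "E a0 y15 \<and> E a1 y15 \<and> E f y15" proof -
          from that have e506: "E a0 y15" and e507: "E a1 y15" and e508: "E f y15" by blast+
          obtain w509 where w509V: "w509 \<in> V" and cnt510: "5 \<le> sum_list (map (\<lambda>x. if E x w509 then 1::int else 0) [a0, a1, a2, b0, b1, b2, c0, c2, f, y12, y14, y15])"
            using g_D[OF G, of "[a0, a1, a2, b0, b1, b2, c0, c2, f, y12, y14, y15]" 4] V(1) V(2) V(3) V(4) V(5) V(6) V(7) V(9) fV y12V y14V y15V by auto
          have cs511: "5 \<le> (if E a0 w509 then 1::int else 0) + ((if E a1 w509 then 1::int else 0) + ((if E a2 w509 then 1::int else 0) + ((if E b0 w509 then 1::int else 0) + ((if E b1 w509 then 1::int else 0) + ((if E b2 w509 then 1::int else 0) + ((if E c0 w509 then 1::int else 0) + ((if E c2 w509 then 1::int else 0) + ((if E f w509 then 1::int else 0) + ((if E y12 w509 then 1::int else 0) + ((if E y14 w509 then 1::int else 0) + ((if E y15 w509 then 1::int else 0))))))))))))" using cnt510 by simp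
          have tr512: "\<not> (E a0 w509 \<and> E b1 w509)" using g_tri[OF G N(3)] by blast
          have tr513: "\<not> (E a0 w509 \<and> E b2 w509)" using g_tri[OF G N(4)] by blast
          have tr514: "\<not> (E a0 w509 \<and> E c0 w509)" using g_tri[OF G N(1)] by blast
          have tr515: "\<not> (E a0 w509 \<and> E y15 w509)" using g_tri[OF G e506] by blast
          have tr516: "\<not> (E a1 w509 \<and> E b0 w509)" using g_tri[OF G N(7)] by blast
          have tr517: "\<not> (E a1 w509 \<and> E b2 w509)" using g_tri[OF G N(8)] by blast
          have tr518: "\<not> (E a1 w509 \<and> E y12 w509)" using g_tri[OF G e298] by blast
          have tr519: "\<not> (E a1 w509 \<and> E y15 w509)" using g_tri[OF G e507] by blast
          have tr520: "\<not> (E a2 w509 \<and> E b0 w509)" using g_tri[OF G N(11)] by blast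
          have tr521: "\<not> (E a2 w509 \<and> E b1 w509)" using g_tri[OF G N(12)] by blast
          have tr522: "\<not> (E a2 w509 \<and> E c2 w509)" using g_tri[OF G N(9)] by blast
          have tr523: "\<not> (E b0 w509 \<and> E c0 w509)" using g_tri[OF G N(2)] by blast
          have tr524: "\<not> (E b0 w509 \<and> E y14 w509)" using g_tri[OF G e492] by blast
          have tr525: "\<not> (E b1 w509 \<and> E y12 w509)" using g_tri[OF G e299] by blast
          have tr526: "\<not> (E b1 w509 \<and> E y14 w509)" using g_tri[OF G e493] by blast
          have tr527: "\<not> (E b2 w509 \<and> E c2 w509)" using g_tri[OF G N(10)] by blast
          have tr528: "\<not> (E b2 w509 \<and> E y14 w509)" using g_tri[OF G e494] by blast
          have tr529: "\<not> (E c0 w509 \<and> E f w509)" using g_tri[OF G ez279] by blast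
          have tr530: "\<not> (E c0 w509 \<and> E y12 w509)" using g_tri[OF G e300] by blast
          have tr531: "\<not> (E c2 w509 \<and> E y12 w509)" using g_tri[OF G e301] by blast
          have tr532: "\<not> (E f w509 \<and> E y14 w509)" using g_tri[OF G e495] by blast
          have tr533: "\<not> (E f w509 \<and> E y15 w509)" using g_tri[OF G e508] by blast
          show False using cs511 tr512 tr513 tr514 tr515 tr516 tr517 tr518 tr519 tr520 tr521 tr522 tr523 tr524 tr525 tr526 tr527 tr528 tr529 tr530 tr531 tr532 tr533 by (smt (verit))
        qed
        have cs534: False if "E b2 y15 \<and> E c0 y15 \<and> E c1 y15" proof -
          from that have e535: "E b2 y15" and e536: "E c0 y15" and e537: "E c1 y15" by blast+
          obtain w538 where w538V: "w538 \<in> V" and cnt539: "5 \<le> sum_list (map (\<lambda>x. if E x w538 then 1::int else 0) [a1, a2, b0, b1, b2, c0, c1, c2, d, y12, y13, y15])"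
            using g_D[OF G, of "[a1, a2, b0, b1, b2, c0, c1, c2, d, y12, y13, y15]" 4] V(2) V(3) V(4) V(5) V(6) V(7) V(8) V(9) dV y12V y13V y15V by auto
          have cs540: "5 \<le> (if E a1 w538 then 1::int else 0) + ((if E a2 w538 then 1::int else 0) + ((if E b0 w538 then 1::int else 0) + ((if E b1 w538 then 1::int else 0) + ((if E b2 w538 then 1::int else 0) + ((if E c0 w538 then 1::int else 0) + ((if E c1 w538 then 1::int else 0) + ((if E c2 w538 then 1::int else 0) + ((if E d w538 then 1::int else 0) + ((if E y12 w538 then 1::int else 0) + ((if E y13 w538 then 1::int else 0) + ((if E y15 w538 then 1::int else 0))))))))))))" using cnt539 by simp
          have tr541: "\<not> (E a1 w538 \<and> E b0 w538)" using g_tri[OF G N(7)] by blast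
          have tr542: "\<not> (E a1 w538 \<and> E b2 w538)" using g_tri[OF G N(8)] by blast
          have tr543: "\<not> (E a1 w538 \<and> E c1 w538)" using g_tri[OF G N(5)] by blast
          have tr544: "\<not> (E a1 w538 \<and> E y12 w538)" using g_tri[OF G e298] by blast
          have tr545: "\<not> (E a2 w538 \<and> E b0 w538)" using g_tri[OF G N(11)] by blast
          have tr546: "\<not> (E a2 w538 \<and> E b1 w538)" using g_tri[OF G N(12)] by blast
          have tr547: "\<not> (E a2 w538 \<and> E c2 w538)" using g_tri[OF G N(9)] by blast
          have tr548: "\<not> (E b0 w538 \<and> E c0 w538)" using g_tri[OF G N(2)] by blast
          have tr549: "\<not> (E b0 w538 \<and> E y13 w538)" using g_tri[OF G e442] by blast
          have tr550: "\<not> (E b1 w538 \<and> E c1 w538)" using g_tri[OF G N(6)] by blast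
          have tr551: "\<not> (E b1 w538 \<and> E y12 w538)" using g_tri[OF G e299] by blast
          have tr552: "\<not> (E b1 w538 \<and> E y13 w538)" using g_tri[OF G e443] by blast
          have tr553: "\<not> (E b2 w538 \<and> E c2 w538)" using g_tri[OF G N(10)] by blast
          have tr554: "\<not> (E b2 w538 \<and> E y13 w538)" using g_tri[OF G e444] by blast
          have tr555: "\<not> (E b2 w538 \<and> E y15 w538)" using g_tri[OF G e535] by blast
          have tr556: "\<not> (E c0 w538 \<and> E y12 w538)" using g_tri[OF G e300] by blast
          have tr557: "\<not> (E c0 w538 \<and> E y15 w538)" using g_tri[OF G e536] by blast
          have tr558: "\<not> (E c1 w538 \<and> E d w538)" using g_tri[OF G ez275] by blast
          have tr559: "\<not> (E c1 w538 \<and> E y15 w538)" using g_tri[OF G e537] by blast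
          have tr560: "\<not> (E c2 w538 \<and> E d w538)" using g_tri[OF G ez276] by blast
          have tr561: "\<not> (E c2 w538 \<and> E y12 w538)" using g_tri[OF G e301] by blast
          have tr562: "\<not> (E d w538 \<and> E y13 w538)" using g_tri[OF G e445] by blast
          show False using cs540 tr541 tr542 tr543 tr544 tr545 tr546 tr547 tr548 tr549 tr550 tr551 tr552 tr553 tr554 tr555 tr556 tr557 tr558 tr559 tr560 tr561 tr562 by (smt (verit))
        qed
        show False using br504 cs505 cs534 by blast
      qed
      show False using br461 cs462 cs491 by blast
    qed
    show False using br317 cs318 cs441 by blast
  qed
  have cs563: False if "E a2 y12 \<and> E b2 y12 \<and> E c0 y12 \<and> E c1 y12" proof -
    from that have e564: "E a2 y12" and e565: "E b2 y12" and e566: "E c0 y12" and e567: "E c1 y12" by blast+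
    obtain y13 where y13V: "y13 \<in> V" and cnt568: "4 \<le> sum_list (map (\<lambda>x. if E x y13 then 1::int else 0) [a0, a1, a2, b0, b1, b2, c1, c2, d])"
      using g_D[OF G, of "[a0, a1, a2, b0, b1, b2, c1, c2, d]" 3] V(1) V(2) V(3) V(4) V(5) V(6) V(8) V(9) dV by auto
    have cs569: "4 \<le> (if E a0 y13 then 1::int else 0) + ((if E a1 y13 then 1::int else 0) + ((if E a2 y13 then 1::int else 0) + ((if E b0 y13 then 1::int else 0) + ((if E b1 y13 then 1::int else 0) + ((if E b2 y13 then 1::int else 0) + ((if E c1 y13 then 1::int else 0) + ((if E c2 y13 then 1::int else 0) + ((if E d y13 then 1::int else 0)))))))))" using cnt568 by simp
    have tr570: "\<not> (E a0 y13 \<and> E b1 y13)" using g_tri[OF G N(3)] by blast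
    have tr571: "\<not> (E a0 y13 \<and> E b2 y13)" using g_tri[OF G N(4)] by blast
    have tr572: "\<not> (E a1 y13 \<and> E b0 y13)" using g_tri[OF G N(7)] by blast
    have tr573: "\<not> (E a1 y13 \<and> E b2 y13)" using g_tri[OF G N(8)] by blast
    have tr574: "\<not> (E a1 y13 \<and> E c1 y13)" using g_tri[OF G N(5)] by blast
    have tr575: "\<not> (E a2 y13 \<and> E b0 y13)" using g_tri[OF G N(11)] by blast
    have tr576: "\<not> (E a2 y13 \<and> E b1 y13)" using g_tri[OF G N(12)] by blast
    have tr577: "\<not> (E a2 y13 \<and> E c2 y13)" using g_tri[OF G N(9)] by blast
    have tr578: "\<not> (E b1 y13 \<and> E c1 y13)" using g_tri[OF G N(6)] by blast
    have tr579: "\<not> (E b2 y13 \<and> E c2 y13)" using g_tri[OF G N(10)] by blast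
    have tr580: "\<not> (E c1 y13 \<and> E d y13)" using g_tri[OF G ez275] by blast
    have tr581: "\<not> (E c2 y13 \<and> E d y13)" using g_tri[OF G ez276] by blast
    have nw582: "\<not> (E a0 y13 \<and> E b0 y13 \<and> E c2 y13 \<and> E c1 y13)" using nw y13V g_sym[OF G] by blast
    have br583: "(E a0 y13 \<and> E a1 y13 \<and> E a2 y13 \<and> E d y13) \<or> (E b0 y13 \<and> E b1 y13 \<and> E b2 y13 \<and> E d y13)" using cs569 tr570 tr571 tr572 tr573 tr574 tr575 tr576 tr577 tr578 tr579 tr580 tr581 nw582 by (smt (verit))
    have cs584: False if "E a0 y13 \<and> E a1 y13 \<and> E a2 y13 \<and> E d y13" proof -
      from that have e585: "E a0 y13" and e586: "E a1 y13" and e587: "E a2 y13" and e588: "E d y13" by blast+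
      obtain y14 where y14V: "y14 \<in> V" and cnt589: "4 \<le> sum_list (map (\<lambda>x. if E x y14 then 1::int else 0) [a0, a1, a2, b0, b2, c0, c2, e, y13])"
        using g_D[OF G, of "[a0, a1, a2, b0, b2, c0, c2, e, y13]" 3] V(1) V(2) V(3) V(4) V(6) V(7) V(9) eV y13V by auto
      have cs590: "4 \<le> (if E a0 y14 then 1::int else 0) + ((if E a1 y14 then 1::int else 0) + ((if E a2 y14 then 1::int else 0) + ((if E b0 y14 then 1::int else 0) + ((if E b2 y14 then 1::int else 0) + ((if E c0 y14 then 1::int else 0) + ((if E c2 y14 then 1::int else 0) + ((if E e y14 then 1::int else 0) + ((if E y13 y14 then 1::int else 0)))))))))" using cnt589 by simp
      have tr591: "\<not> (E a0 y14 \<and> E b2 y14)" using g_tri[OF G N(4)] by blast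
      have tr592: "\<not> (E a0 y14 \<and> E c0 y14)" using g_tri[OF G N(1)] by blast
      have tr593: "\<not> (E a0 y14 \<and> E y13 y14)" using g_tri[OF G e585] by blast
      have tr594: "\<not> (E a1 y14 \<and> E b0 y14)" using g_tri[OF G N(7)] by blast
      have tr595: "\<not> (E a1 y14 \<and> E b2 y14)" using g_tri[OF G N(8)] by blast
      have tr596: "\<not> (E a1 y14 \<and> E y13 y14)" using g_tri[OF G e586] by blast
      have tr597: "\<not> (E a2 y14 \<and> E b0 y14)" using g_tri[OF G N(11)] by blast
      have tr598: "\<not> (E a2 y14 \<and> E c2 y14)" using g_tri[OF G N(9)] by blast
      have tr599: "\<not> (E a2 y14 \<and> E y13 y14)" using g_tri[OF G e587] by blast
      have tr600: "\<not> (E b0 y14 \<and> E c0 y14)" using g_tri[OF G N(2)] by blast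
      have tr601: "\<not> (E b2 y14 \<and> E c2 y14)" using g_tri[OF G N(10)] by blast
      have tr602: "\<not> (E c0 y14 \<and> E e y14)" using g_tri[OF G ez277] by blast
      have tr603: "\<not> (E c2 y14 \<and> E e y14)" using g_tri[OF G ez278] by blast
      have br604: "(E a0 y14 \<and> E a1 y14 \<and> E a2 y14 \<and> E e y14) \<or> (E b0 y14 \<and> E b2 y14 \<and> E e y14 \<and> E y13 y14)" using cs590 tr591 tr592 tr593 tr594 tr595 tr596 tr597 tr598 tr599 tr600 tr601 tr602 tr603 by (smt (verit))
      have cs605: False if "E a0 y14 \<and> E a1 y14 \<and> E a2 y14 \<and> E e y14" proof -
        from that have e606: "E a0 y14" and e607: "E a1 y14" and e608: "E a2 y14" and e609: "E e y14" by blast+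
        obtain y15 where y15V: "y15 \<in> V" and cnt610: "3 \<le> sum_list (map (\<lambda>x. if E x y15 then 1::int else 0) [a0, a1, b0, b1, c0, c1])"
          using g_D[OF G, of "[a0, a1, b0, b1, c0, c1]" 2] V(1) V(2) V(4) V(5) V(7) V(8) by auto
        have cs611: "3 \<le> (if E a0 y15 then 1::int else 0) + ((if E a1 y15 then 1::int else 0) + ((if E b0 y15 then 1::int else 0) + ((if E b1 y15 then 1::int else 0) + ((if E c0 y15 then 1::int else 0) + ((if E c1 y15 then 1::int else 0))))))" using cnt610 by simp
        have tr612: "\<not> (E a0 y15 \<and> E b1 y15)" using g_tri[OF G N(3)] by blast
        have tr613: "\<not> (E a0 y15 \<and> E c0 y15)" using g_tri[OF G N(1)] by blast
        have tr614: "\<not> (E a1 y15 \<and> E b0 y15)" using g_tri[OF G N(7)] by blast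
        have tr615: "\<not> (E a1 y15 \<and> E c1 y15)" using g_tri[OF G N(5)] by blast
        have tr616: "\<not> (E b0 y15 \<and> E c0 y15)" using g_tri[OF G N(2)] by blast
        have tr617: "\<not> (E b1 y15 \<and> E c1 y15)" using g_tri[OF G N(6)] by blast
        have br618: "(E a0 y15 \<and> E b0 y15 \<and> E c1 y15) \<or> (E a1 y15 \<and> E b1 y15 \<and> E c0 y15)" using cs611 tr612 tr613 tr614 tr615 tr616 tr617 by (smt (verit))
        have cs619: False if "E a0 y15 \<and> E b0 y15 \<and> E c1 y15" proof -
          from that have e620: "E a0 y15" and e621: "E b0 y15" and e622: "E c1 y15" by blast+
          obtain w623 where w623V: "w623 \<in> V" and cnt624: "5 \<le> sum_list (map (\<lambda>x. if E x w623 then 1::int else 0) [a0, a1, a2, b0, b2, c0, c1, c2, e, y12, y14, y15])"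
            using g_D[OF G, of "[a0, a1, a2, b0, b2, c0, c1, c2, e, y12, y14, y15]" 4] V(1) V(2) V(3) V(4) V(6) V(7) V(8) V(9) eV y12V y14V y15V by auto
          have cs625: "5 \<le> (if E a0 w623 then 1::int else 0) + ((if E a1 w623 then 1::int else 0) + ((if E a2 w623 then 1::int else 0) + ((if E b0 w623 then 1::int else 0) + ((if E b2 w623 then 1::int else 0) + ((if E c0 w623 then 1::int else 0) + ((if E c1 w623 then 1::int else 0) + ((if E c2 w623 then 1::int else 0) + ((if E e w623 then 1::int else 0) + ((if E y12 w623 then 1::int else 0) + ((if E y14 w623 then 1::int else 0) + ((if E y15 w623 then 1::int else 0))))))))))))" using cnt624 by simp
          have tr626: "\<not> (E a0 w623 \<and> E b2 w623)" using g_tri[OF G N(4)] by blast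
          have tr627: "\<not> (E a0 w623 \<and> E c0 w623)" using g_tri[OF G N(1)] by blast
          have tr628: "\<not> (E a0 w623 \<and> E y14 w623)" using g_tri[OF G e606] by blast
          have tr629: "\<not> (E a0 w623 \<and> E y15 w623)" using g_tri[OF G e620] by blast
          have tr630: "\<not> (E a1 w623 \<and> E b0 w623)" using g_tri[OF G N(7)] by blast
          have tr631: "\<not> (E a1 w623 \<and> E b2 w623)" using g_tri[OF G N(8)] by blast
          have tr632: "\<not> (E a1 w623 \<and> E c1 w623)" using g_tri[OF G N(5)] by blast
          have tr633: "\<not> (E a1 w623 \<and> E y14 w623)" using g_tri[OF G e607] by blast
          have tr634: "\<not> (E a2 w623 \<and> E b0 w623)" using g_tri[OF G N(11)] by blast
          have tr635: "\<not> (E a2 w623 \<and> E c2 w623)" using g_tri[OF G N(9)] by blast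
          have tr636: "\<not> (E a2 w623 \<and> E y12 w623)" using g_tri[OF G e564] by blast
          have tr637: "\<not> (E a2 w623 \<and> E y14 w623)" using g_tri[OF G e608] by blast
          have tr638: "\<not> (E b0 w623 \<and> E c0 w623)" using g_tri[OF G N(2)] by blast
          have tr639: "\<not> (E b0 w623 \<and> E y15 w623)" using g_tri[OF G e621] by blast
          have tr640: "\<not> (E b2 w623 \<and> E c2 w623)" using g_tri[OF G N(10)] by blast
          have tr641: "\<not> (E b2 w623 \<and> E y12 w623)" using g_tri[OF G e565] by blast
          have tr642: "\<not> (E c0 w623 \<and> E e w623)" using g_tri[OF G ez277] by blast
          have tr643: "\<not> (E c0 w623 \<and> E y12 w623)" using g_tri[OF G e566] by blast
          have tr644: "\<not> (E c1 w623 \<and> E y12 w623)" using g_tri[OF G e567] by blast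
          have tr645: "\<not> (E c1 w623 \<and> E y15 w623)" using g_tri[OF G e622] by blast
          have tr646: "\<not> (E c2 w623 \<and> E e w623)" using g_tri[OF G ez278] by blast
          have tr647: "\<not> (E e w623 \<and> E y14 w623)" using g_tri[OF G e609] by blast
          have nw648: "\<not> (E a0 w623 \<and> E b0 w623 \<and> E c2 w623 \<and> E c1 w623)" using nw w623V g_sym[OF G] by blast
          show False using cs625 tr626 tr627 tr628 tr629 tr630 tr631 tr632 tr633 tr634 tr635 tr636 tr637 tr638 tr639 tr640 tr641 tr642 tr643 tr644 tr645 tr646 tr647 nw648 by (smt (verit))
        qed
        have cs649: False if "E a1 y15 \<and> E b1 y15 \<and> E c0 y15" proof -
          from that have e650: "E a1 y15" and e651: "E b1 y15" and e652: "E c0 y15" by blast+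
          obtain w653 where w653V: "w653 \<in> V" and cnt654: "5 \<le> sum_list (map (\<lambda>x. if E x w653 then 1::int else 0) [a0, a1, a2, b1, b2, c0, c1, c2, d, y12, y13, y15])"
            using g_D[OF G, of "[a0, a1, a2, b1, b2, c0, c1, c2, d, y12, y13, y15]" 4] V(1) V(2) V(3) V(5) V(6) V(7) V(8) V(9) dV y12V y13V y15V by auto
          have cs655: "5 \<le> (if E a0 w653 then 1::int else 0) + ((if E a1 w653 then 1::int else 0) + ((if E a2 w653 then 1::int else 0) + ((if E b1 w653 then 1::int else 0) + ((if E b2 w653 then 1::int else 0) + ((if E c0 w653 then 1::int else 0) + ((if E c1 w653 then 1::int else 0) + ((if E c2 w653 then 1::int else 0) + ((if E d w653 then 1::int else 0) + ((if E y12 w653 then 1::int else 0) + ((if E y13 w653 then 1::int else 0) + ((if E y15 w653 then 1::int else 0))))))))))))" using cnt654 by simp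
          have tr656: "\<not> (E a0 w653 \<and> E b1 w653)" using g_tri[OF G N(3)] by blast
          have tr657: "\<not> (E a0 w653 \<and> E b2 w653)" using g_tri[OF G N(4)] by blast
          have tr658: "\<not> (E a0 w653 \<and> E c0 w653)" using g_tri[OF G N(1)] by blast
          have tr659: "\<not> (E a0 w653 \<and> E y13 w653)" using g_tri[OF G e585] by blast
          have tr660: "\<not> (E a1 w653 \<and> E b2 w653)" using g_tri[OF G N(8)] by blast
          have tr661: "\<not> (E a1 w653 \<and> E c1 w653)" using g_tri[OF G N(5)] by blast
          have tr662: "\<not> (E a1 w653 \<and> E y13 w653)" using g_tri[OF G e586] by blast
          have tr663: "\<not> (E a1 w653 \<and> E y15 w653)" using g_tri[OF G e650] by blast
          have tr664: "\<not> (E a2 w653 \<and> E b1 w653)" using g_tri[OF G N(12)] by blast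
          have tr665: "\<not> (E a2 w653 \<and> E c2 w653)" using g_tri[OF G N(9)] by blast
          have tr666: "\<not> (E a2 w653 \<and> E y12 w653)" using g_tri[OF G e564] by blast
          have tr667: "\<not> (E a2 w653 \<and> E y13 w653)" using g_tri[OF G e587] by blast
          have tr668: "\<not> (E b1 w653 \<and> E c1 w653)" using g_tri[OF G N(6)] by blast
          have tr669: "\<not> (E b1 w653 \<and> E y15 w653)" using g_tri[OF G e651] by blast
          have tr670: "\<not> (E b2 w653 \<and> E c2 w653)" using g_tri[OF G N(10)] by blast
          have tr671: "\<not> (E b2 w653 \<and> E y12 w653)" using g_tri[OF G e565] by blast
          have tr672: "\<not> (E c0 w653 \<and> E y12 w653)" using g_tri[OF G e566] by blast
          have tr673: "\<not> (E c0 w653 \<and> E y15 w653)" using g_tri[OF G e652] by blast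
          have tr674: "\<not> (E c1 w653 \<and> E d w653)" using g_tri[OF G ez275] by blast
          have tr675: "\<not> (E c1 w653 \<and> E y12 w653)" using g_tri[OF G e567] by blast
          have tr676: "\<not> (E c2 w653 \<and> E d w653)" using g_tri[OF G ez276] by blast
          have tr677: "\<not> (E d w653 \<and> E y13 w653)" using g_tri[OF G e588] by blast
          show False using cs655 tr656 tr657 tr658 tr659 tr660 tr661 tr662 tr663 tr664 tr665 tr666 tr667 tr668 tr669 tr670 tr671 tr672 tr673 tr674 tr675 tr676 tr677 by (smt (verit))
        qed
        show False using br618 cs619 cs649 by blast
      qed
      have cs678: False if "E b0 y14 \<and> E b2 y14 \<and> E e y14 \<and> E y13 y14" proof -
        from that have e679: "E b0 y14" and e680: "E b2 y14" and e681: "E e y14" and e682: "E y13 y14" by blast+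
        obtain w683 where w683V: "w683 \<in> V" and cnt684: "5 \<le> sum_list (map (\<lambda>x. if E x w683 then 1::int else 0) [a0, a2, b1, b2, c0, c1, c2, d, e, y12, y13, y14])"
          using g_D[OF G, of "[a0, a2, b1, b2, c0, c1, c2, d, e, y12, y13, y14]" 4] V(1) V(3) V(5) V(6) V(7) V(8) V(9) dV eV y12V y13V y14V by auto
        have cs685: "5 \<le> (if E a0 w683 then 1::int else 0) + ((if E a2 w683 then 1::int else 0) + ((if E b1 w683 then 1::int else 0) + ((if E b2 w683 then 1::int else 0) + ((if E c0 w683 then 1::int else 0) + ((if E c1 w683 then 1::int else 0) + ((if E c2 w683 then 1::int else 0) + ((if E d w683 then 1::int else 0) + ((if E e w683 then 1::int else 0) + ((if E y12 w683 then 1::int else 0) + ((if E y13 w683 then 1::int else 0) + ((if E y14 w683 then 1::int else 0))))))))))))" using cnt684 by simp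
        have tr686: "\<not> (E a0 w683 \<and> E b1 w683)" using g_tri[OF G N(3)] by blast
        have tr687: "\<not> (E a0 w683 \<and> E b2 w683)" using g_tri[OF G N(4)] by blast
        have tr688: "\<not> (E a0 w683 \<and> E c0 w683)" using g_tri[OF G N(1)] by blast
        have tr689: "\<not> (E a0 w683 \<and> E y13 w683)" using g_tri[OF G e585] by blast
        have tr690: "\<not> (E a2 w683 \<and> E b1 w683)" using g_tri[OF G N(12)] by blast
        have tr691: "\<not> (E a2 w683 \<and> E c2 w683)" using g_tri[OF G N(9)] by blast
        have tr692: "\<not> (E a2 w683 \<and> E y12 w683)" using g_tri[OF G e564] by blast
        have tr693: "\<not> (E a2 w683 \<and> E y13 w683)" using g_tri[OF G e587] by blast
        have tr694: "\<not> (E b1 w683 \<and> E c1 w683)" using g_tri[OF G N(6)] by blast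
        have tr695: "\<not> (E b2 w683 \<and> E c2 w683)" using g_tri[OF G N(10)] by blast
        have tr696: "\<not> (E b2 w683 \<and> E y12 w683)" using g_tri[OF G e565] by blast
        have tr697: "\<not> (E b2 w683 \<and> E y14 w683)" using g_tri[OF G e680] by blast
        have tr698: "\<not> (E c0 w683 \<and> E e w683)" using g_tri[OF G ez277] by blast
        have tr699: "\<not> (E c0 w683 \<and> E y12 w683)" using g_tri[OF G e566] by blast
        have tr700: "\<not> (E c1 w683 \<and> E d w683)" using g_tri[OF G ez275] by blast
        have tr701: "\<not> (E c1 w683 \<and> E y12 w683)" using g_tri[OF G e567] by blast
        have tr702: "\<not> (E c2 w683 \<and> E d w683)" using g_tri[OF G ez276] by blast
        have tr703: "\<not> (E c2 w683 \<and> E e w683)" using g_tri[OF G ez278] by blast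
        have tr704: "\<not> (E d w683 \<and> E y13 w683)" using g_tri[OF G e588] by blast
        have tr705: "\<not> (E e w683 \<and> E y14 w683)" using g_tri[OF G e681] by blast
        have tr706: "\<not> (E y13 w683 \<and> E y14 w683)" using g_tri[OF G e682] by blast
        show False using cs685 tr686 tr687 tr688 tr689 tr690 tr691 tr692 tr693 tr694 tr695 tr696 tr697 tr698 tr699 tr700 tr701 tr702 tr703 tr704 tr705 tr706 by (smt (verit))
      qed
      show False using br604 cs605 cs678 by blast
    qed
    have cs707: False if "E b0 y13 \<and> E b1 y13 \<and> E b2 y13 \<and> E d y13" proof -
      from that have e708: "E b0 y13" and e709: "E b1 y13" and e710: "E b2 y13" and e711: "E d y13" by blast+
      obtain y14 where y14V: "y14 \<in> V" and cnt712: "4 \<le> sum_list (map (\<lambda>x. if E x y14 then 1::int else 0) [a0, a2, b0, b1, b2, c0, c2, e, y13])"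
        using g_D[OF G, of "[a0, a2, b0, b1, b2, c0, c2, e, y13]" 3] V(1) V(3) V(4) V(5) V(6) V(7) V(9) eV y13V by auto
      have cs713: "4 \<le> (if E a0 y14 then 1::int else 0) + ((if E a2 y14 then 1::int else 0) + ((if E b0 y14 then 1::int else 0) + ((if E b1 y14 then 1::int else 0) + ((if E b2 y14 then 1::int else 0) + ((if E c0 y14 then 1::int else 0) + ((if E c2 y14 then 1::int else 0) + ((if E e y14 then 1::int else 0) + ((if E y13 y14 then 1::int else 0)))))))))" using cnt712 by simp
      have tr714: "\<not> (E a0 y14 \<and> E b1 y14)" using g_tri[OF G N(3)] by blast
      have tr715: "\<not> (E a0 y14 \<and> E b2 y14)" using g_tri[OF G N(4)] by blast
      have tr716: "\<not> (E a0 y14 \<and> E c0 y14)" using g_tri[OF G N(1)] by blast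
      have tr717: "\<not> (E a2 y14 \<and> E b0 y14)" using g_tri[OF G N(11)] by blast
      have tr718: "\<not> (E a2 y14 \<and> E b1 y14)" using g_tri[OF G N(12)] by blast
      have tr719: "\<not> (E a2 y14 \<and> E c2 y14)" using g_tri[OF G N(9)] by blast
      have tr720: "\<not> (E b0 y14 \<and> E c0 y14)" using g_tri[OF G N(2)] by blast
      have tr721: "\<not> (E b0 y14 \<and> E y13 y14)" using g_tri[OF G e708] by blast
      have tr722: "\<not> (E b1 y14 \<and> E y13 y14)" using g_tri[OF G e709] by blast
      have tr723: "\<not> (E b2 y14 \<and> E c2 y14)" using g_tri[OF G N(10)] by blast
      have tr724: "\<not> (E b2 y14 \<and> E y13 y14)" using g_tri[OF G e710] by blast
      have tr725: "\<not> (E c0 y14 \<and> E e y14)" using g_tri[OF G ez277] by blast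
      have tr726: "\<not> (E c2 y14 \<and> E e y14)" using g_tri[OF G ez278] by blast
      have br727: "(E a0 y14 \<and> E a2 y14 \<and> E e y14 \<and> E y13 y14) \<or> (E b0 y14 \<and> E b1 y14 \<and> E b2 y14 \<and> E e y14)" using cs713 tr714 tr715 tr716 tr717 tr718 tr719 tr720 tr721 tr722 tr723 tr724 tr725 tr726 by (smt (verit))
      have cs728: False if "E a0 y14 \<and> E a2 y14 \<and> E e y14 \<and> E y13 y14" proof -
        from that have e729: "E a0 y14" and e730: "E a2 y14" and e731: "E e y14" and e732: "E y13 y14" by blast+
        obtain w733 where w733V: "w733 \<in> V" and cnt734: "5 \<le> sum_list (map (\<lambda>x. if E x w733 then 1::int else 0) [a1, a2, b0, b2, c0, c1, c2, d, e, y12, y13, y14])"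
          using g_D[OF G, of "[a1, a2, b0, b2, c0, c1, c2, d, e, y12, y13, y14]" 4] V(2) V(3) V(4) V(6) V(7) V(8) V(9) dV eV y12V y13V y14V by auto
        have cs735: "5 \<le> (if E a1 w733 then 1::int else 0) + ((if E a2 w733 then 1::int else 0) + ((if E b0 w733 then 1::int else 0) + ((if E b2 w733 then 1::int else 0) + ((if E c0 w733 then 1::int else 0) + ((if E c1 w733 then 1::int else 0) + ((if E c2 w733 then 1::int else 0) + ((if E d w733 then 1::int else 0) + ((if E e w733 then 1::int else 0) + ((if E y12 w733 then 1::int else 0) + ((if E y13 w733 then 1::int else 0) + ((if E y14 w733 then 1::int else 0))))))))))))" using cnt734 by simp
        have tr736: "\<not> (E a1 w733 \<and> E b0 w733)" using g_tri[OF G N(7)] by blast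
        have tr737: "\<not> (E a1 w733 \<and> E b2 w733)" using g_tri[OF G N(8)] by blast
        have tr738: "\<not> (E a1 w733 \<and> E c1 w733)" using g_tri[OF G N(5)] by blast
        have tr739: "\<not> (E a2 w733 \<and> E b0 w733)" using g_tri[OF G N(11)] by blast
        have tr740: "\<not> (E a2 w733 \<and> E c2 w733)" using g_tri[OF G N(9)] by blast
        have tr741: "\<not> (E a2 w733 \<and> E y12 w733)" using g_tri[OF G e564] by blast
        have tr742: "\<not> (E a2 w733 \<and> E y14 w733)" using g_tri[OF G e730] by blast
        have tr743: "\<not> (E b0 w733 \<and> E c0 w733)" using g_tri[OF G N(2)] by blast
        have tr744: "\<not> (E b0 w733 \<and> E y13 w733)" using g_tri[OF G e708] by blast
        have tr745: "\<not> (E b2 w733 \<and> E c2 w733)" using g_tri[OF G N(10)] by blast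
        have tr746: "\<not> (E b2 w733 \<and> E y12 w733)" using g_tri[OF G e565] by blast
        have tr747: "\<not> (E b2 w733 \<and> E y13 w733)" using g_tri[OF G e710] by blast
        have tr748: "\<not> (E c0 w733 \<and> E e w733)" using g_tri[OF G ez277] by blast
        have tr749: "\<not> (E c0 w733 \<and> E y12 w733)" using g_tri[OF G e566] by blast
        have tr750: "\<not> (E c1 w733 \<and> E d w733)" using g_tri[OF G ez275] by blast
        have tr751: "\<not> (E c1 w733 \<and> E y12 w733)" using g_tri[OF G e567] by blast
        have tr752: "\<not> (E c2 w733 \<and> E d w733)" using g_tri[OF G ez276] by blast
        have tr753: "\<not> (E c2 w733 \<and> E e w733)" using g_tri[OF G ez278] by blast
        have tr754: "\<not> (E d w733 \<and> E y13 w733)" using g_tri[OF G e711] by blast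
        have tr755: "\<not> (E e w733 \<and> E y14 w733)" using g_tri[OF G e731] by blast
        have tr756: "\<not> (E y13 w733 \<and> E y14 w733)" using g_tri[OF G e732] by blast
        show False using cs735 tr736 tr737 tr738 tr739 tr740 tr741 tr742 tr743 tr744 tr745 tr746 tr747 tr748 tr749 tr750 tr751 tr752 tr753 tr754 tr755 tr756 by (smt (verit))
      qed
      have cs757: False if "E b0 y14 \<and> E b1 y14 \<and> E b2 y14 \<and> E e y14" proof -
        from that have e758: "E b0 y14" and e759: "E b1 y14" and e760: "E b2 y14" and e761: "E e y14" by blast+
        obtain y15 where y15V: "y15 \<in> V" and cnt762: "3 \<le> sum_list (map (\<lambda>x. if E x y15 then 1::int else 0) [a0, a1, b0, b1, c0, c1])"
          using g_D[OF G, of "[a0, a1, b0, b1, c0, c1]" 2] V(1) V(2) V(4) V(5) V(7) V(8) by auto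
        have cs763: "3 \<le> (if E a0 y15 then 1::int else 0) + ((if E a1 y15 then 1::int else 0) + ((if E b0 y15 then 1::int else 0) + ((if E b1 y15 then 1::int else 0) + ((if E c0 y15 then 1::int else 0) + ((if E c1 y15 then 1::int else 0))))))" using cnt762 by simp
        have tr764: "\<not> (E a0 y15 \<and> E b1 y15)" using g_tri[OF G N(3)] by blast
        have tr765: "\<not> (E a0 y15 \<and> E c0 y15)" using g_tri[OF G N(1)] by blast
        have tr766: "\<not> (E a1 y15 \<and> E b0 y15)" using g_tri[OF G N(7)] by blast
        have tr767: "\<not> (E a1 y15 \<and> E c1 y15)" using g_tri[OF G N(5)] by blast
        have tr768: "\<not> (E b0 y15 \<and> E c0 y15)" using g_tri[OF G N(2)] by blast
        have tr769: "\<not> (E b1 y15 \<and> E c1 y15)" using g_tri[OF G N(6)] by blast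
        have br770: "(E a0 y15 \<and> E b0 y15 \<and> E c1 y15) \<or> (E a1 y15 \<and> E b1 y15 \<and> E c0 y15)" using cs763 tr764 tr765 tr766 tr767 tr768 tr769 by (smt (verit))
        have cs771: False if "E a0 y15 \<and> E b0 y15 \<and> E c1 y15" proof -
          from that have e772: "E a0 y15" and e773: "E b0 y15" and e774: "E c1 y15" by blast+
          obtain w775 where w775V: "w775 \<in> V" and cnt776: "5 \<le> sum_list (map (\<lambda>x. if E x w775 then 1::int else 0) [a0, a2, b0, b1, b2, c0, c1, c2, e, y12, y14, y15])"
            using g_D[OF G, of "[a0, a2, b0, b1, b2, c0, c1, c2, e, y12, y14, y15]" 4] V(1) V(3) V(4) V(5) V(6) V(7) V(8) V(9) eV y12V y14V y15V by auto
          have cs777: "5 \<le> (if E a0 w775 then 1::int else 0) + ((if E a2 w775 then 1::int else 0) + ((if E b0 w775 then 1::int else 0) + ((if E b1 w775 then 1::int else 0) + ((if E b2 w775 then 1::int else 0) + ((if E c0 w775 then 1::int else 0) + ((if E c1 w775 then 1::int else 0) + ((if E c2 w775 then 1::int else 0) + ((if E e w775 then 1::int else 0) + ((if E y12 w775 then 1::int else 0) + ((if E y14 w775 then 1::int else 0) + ((if E y15 w775 then 1::int else 0))))))))))))" using cnt776 by simp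
          have tr778: "\<not> (E a0 w775 \<and> E b1 w775)" using g_tri[OF G N(3)] by blast
          have tr779: "\<not> (E a0 w775 \<and> E b2 w775)" using g_tri[OF G N(4)] by blast
          have tr780: "\<not> (E a0 w775 \<and> E c0 w775)" using g_tri[OF G N(1)] by blast
          have tr781: "\<not> (E a0 w775 \<and> E y15 w775)" using g_tri[OF G e772] by blast
          have tr782: "\<not> (E a2 w775 \<and> E b0 w775)" using g_tri[OF G N(11)] by blast
          have tr783: "\<not> (E a2 w775 \<and> E b1 w775)" using g_tri[OF G N(12)] by blast
          have tr784: "\<not> (E a2 w775 \<and> E c2 w775)" using g_tri[OF G N(9)] by blast
          have tr785: "\<not> (E a2 w775 \<and> E y12 w775)" using g_tri[OF G e564] by blast
          have tr786: "\<not> (E b0 w775 \<and> E c0 w775)" using g_tri[OF G N(2)] by blast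
          have tr787: "\<not> (E b0 w775 \<and> E y14 w775)" using g_tri[OF G e758] by blast
          have tr788: "\<not> (E b0 w775 \<and> E y15 w775)" using g_tri[OF G e773] by blast
          have tr789: "\<not> (E b1 w775 \<and> E c1 w775)" using g_tri[OF G N(6)] by blast
          have tr790: "\<not> (E b1 w775 \<and> E y14 w775)" using g_tri[OF G e759] by blast
          have tr791: "\<not> (E b2 w775 \<and> E c2 w775)" using g_tri[OF G N(10)] by blast
          have tr792: "\<not> (E b2 w775 \<and> E y12 w775)" using g_tri[OF G e565] by blast
          have tr793: "\<not> (E b2 w775 \<and> E y14 w775)" using g_tri[OF G e760] by blast
          have tr794: "\<not> (E c0 w775 \<and> E e w775)" using g_tri[OF G ez277] by blast
          have tr795: "\<not> (E c0 w775 \<and> E y12 w775)" using g_tri[OF G e566] by blast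
          have tr796: "\<not> (E c1 w775 \<and> E y12 w775)" using g_tri[OF G e567] by blast
          have tr797: "\<not> (E c1 w775 \<and> E y15 w775)" using g_tri[OF G e774] by blast
          have tr798: "\<not> (E c2 w775 \<and> E e w775)" using g_tri[OF G ez278] by blast
          have tr799: "\<not> (E e w775 \<and> E y14 w775)" using g_tri[OF G e761] by blast
          have nw800: "\<not> (E a0 w775 \<and> E b0 w775 \<and> E c2 w775 \<and> E c1 w775)" using nw w775V g_sym[OF G] by blast
          show False using cs777 tr778 tr779 tr780 tr781 tr782 tr783 tr784 tr785 tr786 tr787 tr788 tr789 tr790 tr791 tr792 tr793 tr794 tr795 tr796 tr797 tr798 tr799 nw800 by (smt (verit))
        qed
        have cs801: False if "E a1 y15 \<and> E b1 y15 \<and> E c0 y15" proof -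
          from that have e802: "E a1 y15" and e803: "E b1 y15" and e804: "E c0 y15" by blast+
          obtain w805 where w805V: "w805 \<in> V" and cnt806: "5 \<le> sum_list (map (\<lambda>x. if E x w805 then 1::int else 0) [a1, a2, b0, b1, b2, c0, c1, c2, d, y12, y13, y15])"
            using g_D[OF G, of "[a1, a2, b0, b1, b2, c0, c1, c2, d, y12, y13, y15]" 4] V(2) V(3) V(4) V(5) V(6) V(7) V(8) V(9) dV y12V y13V y15V by auto
          have cs807: "5 \<le> (if E a1 w805 then 1::int else 0) + ((if E a2 w805 then 1::int else 0) + ((if E b0 w805 then 1::int else 0) + ((if E b1 w805 then 1::int else 0) + ((if E b2 w805 then 1::int else 0) + ((if E c0 w805 then 1::int else 0) + ((if E c1 w805 then 1::int else 0) + ((if E c2 w805 then 1::int else 0) + ((if E d w805 then 1::int else 0) + ((if E y12 w805 then 1::int else 0) + ((if E y13 w805 then 1::int else 0) + ((if E y15 w805 then 1::int else 0))))))))))))" using cnt806 by simp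
          have tr808: "\<not> (E a1 w805 \<and> E b0 w805)" using g_tri[OF G N(7)] by blast
          have tr809: "\<not> (E a1 w805 \<and> E b2 w805)" using g_tri[OF G N(8)] by blast
          have tr810: "\<not> (E a1 w805 \<and> E c1 w805)" using g_tri[OF G N(5)] by blast
          have tr811: "\<not> (E a1 w805 \<and> E y15 w805)" using g_tri[OF G e802] by blast
          have tr812: "\<not> (E a2 w805 \<and> E b0 w805)" using g_tri[OF G N(11)] by blast
          have tr813: "\<not> (E a2 w805 \<and> E b1 w805)" using g_tri[OF G N(12)] by blast
          have tr814: "\<not> (E a2 w805 \<and> E c2 w805)" using g_tri[OF G N(9)] by blast
          have tr815: "\<not> (E a2 w805 \<and> E y12 w805)" using g_tri[OF G e564] by blast
          have tr816: "\<not> (E b0 w805 \<and> E c0 w805)" using g_tri[OF G N(2)] by blast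
          have tr817: "\<not> (E b0 w805 \<and> E y13 w805)" using g_tri[OF G e708] by blast
          have tr818: "\<not> (E b1 w805 \<and> E c1 w805)" using g_tri[OF G N(6)] by blast
          have tr819: "\<not> (E b1 w805 \<and> E y13 w805)" using g_tri[OF G e709] by blast
          have tr820: "\<not> (E b1 w805 \<and> E y15 w805)" using g_tri[OF G e803] by blast
          have tr821: "\<not> (E b2 w805 \<and> E c2 w805)" using g_tri[OF G N(10)] by blast
          have tr822: "\<not> (E b2 w805 \<and> E y12 w805)" using g_tri[OF G e565] by blast
          have tr823: "\<not> (E b2 w805 \<and> E y13 w805)" using g_tri[OF G e710] by blast
          have tr824: "\<not> (E c0 w805 \<and> E y12 w805)" using g_tri[OF G e566] by blast
          have tr825: "\<not> (E c0 w805 \<and> E y15 w805)" using g_tri[OF G e804] by blast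
          have tr826: "\<not> (E c1 w805 \<and> E d w805)" using g_tri[OF G ez275] by blast
          have tr827: "\<not> (E c1 w805 \<and> E y12 w805)" using g_tri[OF G e567] by blast
          have tr828: "\<not> (E c2 w805 \<and> E d w805)" using g_tri[OF G ez276] by blast
          have tr829: "\<not> (E d w805 \<and> E y13 w805)" using g_tri[OF G e711] by blast
          show False using cs807 tr808 tr809 tr810 tr811 tr812 tr813 tr814 tr815 tr816 tr817 tr818 tr819 tr820 tr821 tr822 tr823 tr824 tr825 tr826 tr827 tr828 tr829 by (smt (verit))
        qed
        show False using br770 cs771 cs801 by blast
      qed
      show False using br727 cs728 cs757 by blast
    qed
    show False using br583 cs584 cs707 by blast
  qed
  show False using br296 cs297 cs563 by blast
qed

lemma core:
  assumes G: "in_D4 V E"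
  and V: "a0 \<in> V" "a1 \<in> V" "a2 \<in> V" "b0 \<in> V" "b1 \<in> V" "b2 \<in> V" "c0 \<in> V" "c1 \<in> V" "c2 \<in> V"
  and N: "E a0 c0" "E b0 c0" "E a0 b1" "E a0 b2" "E a1 c1" "E b1 c1" "E a1 b0" "E a1 b2" "E a2 c2" "E b2 c2" "E a2 b0" "E a2 b1"
  and n01: "c0 \<noteq> c1" and n02: "c0 \<noteq> c2" and n12: "c1 \<noteq> c2"
  shows "E c2 c1 \<or> (\<exists>y\<in>V. E y a0 \<and> E y b0 \<and> E y c2 \<and> E y c1)"
proof (rule ccontr)
  assume H: "\<not> (E c2 c1 \<or> (\<exists>y\<in>V. E y a0 \<and> E y b0 \<and> E y c2 \<and> E y c1))"
  then have nw: "\<not> (\<exists>w\<in>V. E w a0 \<and> E w b0 \<and> E w c2 \<and> E w c1)" by blast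
  have e12: "\<not> E c1 c2" using H g_sym[OF G] by blast
  show False
  proof (cases "E c0 c1")
    case True
    note e01 = True
    show False
    proof (cases "E c0 c2")
      case True
      then show False using nw V(7) N(1) N(2) e01 g_sym[OF G] by blast
    next
      case False
      show False using caseB[OF G V N nw e01 False e12 n02 n12] .
    qed
  next
    case False
    note e01 = False
    show False
    proof (cases "E c0 c2")
      case True
      have nw': "\<not> (\<exists>w\<in>V. E w a0 \<and> E w b0 \<and> E w c1 \<and> E w c2)" using nw by blast
      have e21: "\<not> E c2 c1" using H by blast
      show False using caseB[OF G V(1,3,2,4,6,5,7,9,8) N(1,2,4,3,9,10,11,12,5,6,7,8) nw' True e01 e21 n01 n12[symmetric]] .
    next
      case False
      show False using caseC[OF G V N nw e01 False e12 n01 n02 n12] .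
    qed
  qed
qed

theorem mainTheorem12:
  fixes V :: "'a set" and E :: "'a \<Rightarrow> 'a \<Rightarrow> bool"
    and a b c :: "nat \<Rightarrow> 'a"
  assumes G: "in_D4 V E"
    and inV: "\<forall>i<3. a i \<in> V \<and> b i \<in> V \<and> c i \<in> V"
    and dist: "card (a ` {0..<3} \<union> b ` {0..<3} \<union> c ` {0..<3}) = 9"
    and ac: "\<forall>i<3. E (a i) (c i) \<and> E (b i) (c i)"
    and ab: "\<forall>i<3. \<forall>j<3. i \<noteq> j \<longrightarrow> E (a i) (b j)"
    and i: "i < 3"
  shows "E (c ((i + 2) mod 3)) (c ((i + 1) mod 3)) \<or>
         (\<exists>y\<in>V. E y (a i) \<and> E y (b i) \<and> E y (c ((i + 2) mod 3)) \<and> E y (c ((i + 1) mod 3)))"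
proof -
  have s: "a ` {0..<3} \<union> b ` {0..<3} \<union> c ` {0..<3} = set [a 0, a 1, a 2, b 0, b 1, b 2, c 0, c 1, c 2]"
  proof -
    have "{0..<3} = {0,1,2::nat}" by auto
    then show ?thesis by auto
  qed
  have "distinct [a 0, a 1, a 2, b 0, b 1, b 2, c 0, c 1, c 2]"
    using dist unfolding s by (intro card_distinct) simp
  then have cd: "c 0 \<noteq> c 1" "c 0 \<noteq> c 2" "c 1 \<noteq> c 2" by auto
  have V: "a 0 \<in> V" "a 1 \<in> V" "a 2 \<in> V" "b 0 \<in> V" "b 1 \<in> V" "b 2 \<in> V" "c 0 \<in> V" "c 1 \<in> V" "c 2 \<in> V"
    using inV by auto
  have A: "E (a 0) (c 0)" "E (b 0) (c 0)" "E (a 1) (c 1)" "E (b 1) (c 1)" "E (a 2) (c 2)" "E (b 2) (c 2)"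
    using ac by auto
  have B: "E (a 0) (b 1)" "E (a 0) (b 2)" "E (a 1) (b 0)" "E (a 1) (b 2)" "E (a 2) (b 0)" "E (a 2) (b 1)"
    using ab by auto
  consider "i = 0" | "i = 1" | "i = 2" using i by linarith
  then show ?thesis
  proof cases
    case 1
    then show ?thesis using core[OF G V(1,2,3,4,5,6,7,8,9) A(1,2) B(1,2) A(3,4) B(3,4) A(5,6) B(5,6) cd(1,2,3)] by (simp add: numeral_2_eq_2)
  next
    case 2
    then show ?thesis using core[OF G V(2,3,1,5,6,4,8,9,7) A(3,4) B(4,3) A(5,6) B(6,5) A(1,2) B(1,2) cd(3) cd(1)[symmetric] cd(2)[symmetric]] by (simp add: numeral_2_eq_2)
  next
    case 3
    then show ?thesis using core[OF G V(3,1,2,6,4,5,9,7,8) A(5,6) B(5,6) A(1,2) B(2,1) A(3,4) B(4,3) cd(2)[symmetric] cd(3)[symmetric] cd(1)] by (simp add: numeral_2_eq_2)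
  qed
qed

end
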